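(* Let $k\geq 3$ be an integer, let $D$ be a digraph containing no subdivision of $B(k,1;1)$, let $\mathcal{C}$ be a nice collection of directed cycles of $D$ (with respect to $k$), and let $\mathcal{S}$ be a component of $\mathcal{C}$. Then the subdigraph of $D$ induced by $V(\bigcup\mathcal{S})$ has chromatic number at most $2k-2$.
   Context: Chromatic number of a digraph means that of its underlying undirected graph. For a positive integer $k$, a collection $\mathcal{C}$ of directed cycles of a digraph $D$ is nice if every cycle of $\mathcal{C}$ has length at least $2k-2$ and any two distinct cycles of $\mathcal{C}$ share at most one vertex. The components of $\mathcal{C}$ are the sets of cycles corresponding to connected components of the graph with vertex set $\mathcal{C}$ in which two cycles are adjacent iff they share a vertex. $V(\bigcup\mathcal{S})$ is the union of the vertex sets of the cycles in $\mathcal{S}$. A digraph contains a subdivision of $B(k_1,k_2;k_3)$ if there exist distinct vertices $u,v$ and three pairwise internally vertex-disjoint directed paths: two from $u$ to $v$ of lengths at least $k_1$ and $k_2$, and one from $v$ to $u$ of length at least $k_3$. *)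

theory Defs
  imports Main
begin

text \<open>A digraph is given by a finite vertex set V and an arc set A with A \<subseteq> V \<times> V
  and no loops (parallel arcs are impossible in this encoding; digons are allowed).\<close>

definition digraph :: "'a set \<Rightarrow> ('a \<times> 'a) set \<Rightarrow> bool" where
  "digraph V A \<longleftrightarrow> finite V \<and> A \<subseteq> V \<times> V \<and> (\<forall>x. (x, x) \<notin> A)"

definition dpath :: "('a \<times> 'a) set \<Rightarrow> 'a list \<Rightarrow> bool" where
  "dpath A xs \<longleftrightarrow> xs \<noteq> [] \<and> distinct xs \<and>
     (\<forall>i. i + 1 < length xs \<longrightarrow> (xs ! i, xs ! (i + 1)) \<in> A)"

definition path_len :: "'a list \<Rightarrow> nat" where
  "path_len xs = length xs - 1"

definition dcycle :: "('a \<times> 'a) set \<Rightarrow> 'a list \<Rightarrow> bool" where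
  "dcycle A xs \<longleftrightarrow> length xs \<ge> 2 \<and> distinct xs \<and>
     (\<forall>i < length xs. (xs ! i, xs ! (Suc i mod length xs)) \<in> A)"

definition contains_subdiv_B :: "('a \<times> 'a) set \<Rightarrow> nat \<Rightarrow> nat \<Rightarrow> nat \<Rightarrow> bool" where
  "contains_subdiv_B A k1 k2 k3 \<longleftrightarrow>
     (\<exists>u v P1 P2 P3. u \<noteq> v \<and>
        dpath A P1 \<and> hd P1 = u \<and> last P1 = v \<and> path_len P1 \<ge> k1 \<and>
        dpath A P2 \<and> hd P2 = u \<and> last P2 = v \<and> path_len P2 \<ge> k2 \<and>
        dpath A P3 \<and> hd P3 = v \<and> last P3 = u \<and> path_len P3 \<ge> k3 \<and>
        P1 \<noteq> P2 \<and>
        set P1 \<inter> set P2 \<subseteq> {u, v} \<and>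
        set P1 \<inter> set P3 \<subseteq> {u, v} \<and>
        set P2 \<inter> set P3 \<subseteq> {u, v})"

definition nice :: "('a \<times> 'a) set \<Rightarrow> nat \<Rightarrow> 'a list set \<Rightarrow> bool" where
  "nice A k \<C> \<longleftrightarrow>
     (\<forall>c \<in> \<C>. dcycle A c \<and> length c \<ge> 2 * k - 2) \<and>
     (\<forall>c1 \<in> \<C>. \<forall>c2 \<in> \<C>. c1 \<noteq> c2 \<longrightarrow> card (set c1 \<inter> set c2) \<le> 1)"

definition share_rel :: "'a list set \<Rightarrow> ('a list \<times> 'a list) set" where
  "share_rel \<C> = {(c1, c2). c1 \<in> \<C> \<and> c2 \<in> \<C> \<and> set c1 \<inter> set c2 \<noteq> {}}"

definition is_component :: "'a list set \<Rightarrow> 'a list set \<Rightarrow> bool" where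
  "is_component \<C> \<S> \<longleftrightarrow>
     (\<exists>c0 \<in> \<C>. \<S> = {c \<in> \<C>. (c0, c) \<in> (share_rel \<C>)\<^sup>*})"

definition proper_colouring :: "'a set \<Rightarrow> ('a \<times> 'a) set \<Rightarrow> nat \<Rightarrow> ('a \<Rightarrow> nat) \<Rightarrow> bool" where
  "proper_colouring W A n f \<longleftrightarrow>
     (\<forall>x \<in> W. f x < n) \<and> (\<forall>(x, y) \<in> A. x \<in> W \<longrightarrow> y \<in> W \<longrightarrow> f x \<noteq> f y)"

definition chromatic_number :: "'a set \<Rightarrow> ('a \<times> 'a) set \<Rightarrow> nat" where
  "chromatic_number W A = (LEAST n. \<exists>f. proper_colouring W A n f)"

definition induced_arcs :: "('a \<times> 'a) set \<Rightarrow> 'a set \<Rightarrow> ('a \<times> 'a) set" where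
  "induced_arcs A W = A \<inter> (W \<times> W)"

end

theory Submission
  imports Defs
begin

lemma dpath_succ: "dpath A xs \<longleftrightarrow> xs \<noteq> [] \<and> distinct xs \<and> successively (\<lambda>a b. (a,b) \<in> A) xs"
  unfolding dpath_def successively_conv_nth by auto

lemma dcycle_succ: "dcycle A xs \<longleftrightarrow> length xs \<ge> 2 \<and> distinct xs \<and> successively (\<lambda>a b. (a,b) \<in> A) xs \<and> (last xs, hd xs) \<in> A"
proof -
  have "(\<forall>i < length xs. (xs ! i, xs ! (Suc i mod length xs)) \<in> A) \<longleftrightarrow>
        (\<forall>i. Suc i < length xs \<longrightarrow> (xs ! i, xs ! Suc i) \<in> A) \<and> (last xs, hd xs) \<in> A" if "length xs \<ge> 2"
  proof
    assume H: "\<forall>i < length xs. (xs ! i, xs ! (Suc i mod length xs)) \<in> A"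
    show "(\<forall>i. Suc i < length xs \<longrightarrow> (xs ! i, xs ! Suc i) \<in> A) \<and> (last xs, hd xs) \<in> A"
    proof
      show "\<forall>i. Suc i < length xs \<longrightarrow> (xs ! i, xs ! Suc i) \<in> A" using H by (metis Suc_lessD mod_less)
      have "(xs ! (length xs - 1), xs ! (Suc (length xs - 1) mod length xs)) \<in> A" using H that by auto
      moreover have "Suc (length xs - 1) = length xs" using that by auto
      moreover have "xs \<noteq> []" using that by auto
      ultimately show "(last xs, hd xs) \<in> A" by (simp add: last_conv_nth hd_conv_nth)
    qed
  next
    assume H: "(\<forall>i. Suc i < length xs \<longrightarrow> (xs ! i, xs ! Suc i) \<in> A) \<and> (last xs, hd xs) \<in> A"
    show "\<forall>i < length xs. (xs ! i, xs ! (Suc i mod length xs)) \<in> A"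
    proof (intro allI impI)
      fix i assume i: "i < length xs"
      show "(xs ! i, xs ! (Suc i mod length xs)) \<in> A"
      proof (cases "Suc i < length xs")
        case True then show ?thesis using H by auto
      next
        case False
        then have si: "Suc i = length xs" using i by auto
        have ne: "xs \<noteq> []" using that by auto
        have "i = length xs - 1" using si by simp
        then have "xs ! i = last xs" using ne by (simp add: last_conv_nth)
        moreover have "xs ! (Suc i mod length xs) = hd xs" using si ne by (simp add: hd_conv_nth)
        ultimately show ?thesis using H by simp
      qed
    qed
  qed
  then show ?thesis unfolding dcycle_def successively_conv_nth by auto
qed

lemma path_len_pos: "dpath A P \<Longrightarrow> hd P \<noteq> last P \<Longrightarrow> path_len P \<ge> 1"
  unfolding dpath_def path_len_def
  by (cases P; cases "tl P"; auto)

lemma dpath_arc: "(a,b) \<in> A \<Longrightarrow> a \<noteq> b \<Longrightarrow> dpath A [a,b] \<and> path_len [a,b] = 1"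
  by (simp add: dpath_succ path_len_def)

lemma dpath_single: "dpath A [a]"
  by (simp add: dpath_succ)

lemma dpath_join:
  assumes P: "dpath A P" and Q: "dpath A Q" and e: "last P = hd Q" and d: "set P \<inter> set Q \<subseteq> {hd Q}"
  shows "dpath A (P @ tl Q) \<and> hd (P @ tl Q) = hd P \<and> last (P @ tl Q) = last Q \<and>
         set (P @ tl Q) = set P \<union> set Q \<and> path_len (P @ tl Q) = path_len P + path_len Q"
proof -
  obtain q Q' where QQ: "Q = q # Q'" using Q by (cases Q) (auto simp: dpath_def)
  have Pne: "P \<noteq> []" using P by (auto simp: dpath_def)
  have qP: "q \<in> set P" using e Pne QQ by (metis last_in_set list.sel(1))
  show ?thesis
  proof (cases "Q' = []")
    case True
    then show ?thesis using QQ e Pne P qP by (auto simp: path_len_def)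
  next
    case False
    have sP: "successively (\<lambda>a b. (a,b) \<in> A) P" and dP: "distinct P" using P by (auto simp: dpath_succ)
    have sQ: "successively (\<lambda>a b. (a,b) \<in> A) (q # Q')" and dQ: "distinct (q # Q')" using Q QQ by (auto simp: dpath_succ)
    have sQ': "successively (\<lambda>a b. (a,b) \<in> A) Q'" using sQ by (auto simp: successively_Cons)
    have j: "(q, hd Q') \<in> A" using sQ False by (auto simp: successively_Cons)
    have dis: "set P \<inter> set Q' = {}" using d dQ QQ by auto
    have "successively (\<lambda>a b. (a,b) \<in> A) (P @ Q')"
      using sP sQ' j e QQ False Pne by (auto simp: successively_append_iff)
    moreover have "distinct (P @ Q')" using dP dQ dis by auto
    moreover have "length P > 0" using Pne by auto
    then have "path_len (P @ tl Q) = path_len P + path_len Q" using QQ unfolding path_len_def by (simp del: length_greater_0_conv) 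
    ultimately show ?thesis using QQ False Pne e qP
      by (auto simp: dpath_succ)
  qed
qed

lemma dcycle_rotate1: "dcycle A c \<Longrightarrow> dcycle A (rotate1 c)"
proof -
  assume c: "dcycle A c"
  then obtain x xs where cc: "c = x # xs" and xs: "xs \<noteq> []" by (cases c; cases "tl c") (auto simp: dcycle_def)
  have s: "successively (\<lambda>a b. (a,b) \<in> A) (x # xs)" and w: "(last c, hd c) \<in> A" and d: "distinct c"
    using c cc by (auto simp: dcycle_succ)
  have "successively (\<lambda>a b. (a,b) \<in> A) (xs @ [x])"
    using s w cc xs by (auto simp: successively_append_iff successively_Cons)
  moreover have "(x, hd xs) \<in> A" using s xs by (auto simp: successively_Cons)
  ultimately show ?thesis using c cc xs d by (auto simp: dcycle_succ)
qed

lemma dcycle_rotate: "dcycle A c \<Longrightarrow> dcycle A (rotate n c)"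
  by (induction n) (auto simp: dcycle_rotate1)

lemma set_take_nth: "n \<le> length r \<Longrightarrow> set (take n r) = (\<lambda>t. r ! t) ` {..<n}"
proof (intro set_eqI iffI)
  fix x assume "n \<le> length r" "x \<in> set (take n r)"
  then obtain i where "i < n" "x = take n r ! i" by (auto simp: set_conv_nth)
  then show "x \<in> (\<lambda>t. r ! t) ` {..<n}" by auto
next
  fix x assume "n \<le> length r" "x \<in> (\<lambda>t. r ! t) ` {..<n}"
  then obtain i where "i < n" "x = r ! i" by auto
  then have "x = take n r ! i" "i < length (take n r)" using \<open>n \<le> length r\<close> by auto
  then show "x \<in> set (take n r)" by (metis nth_mem)
qed

lemma set_drop_nth: "set (drop n r) = (\<lambda>t. r ! t) ` {n..<length r}"
proof (intro set_eqI iffI)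
  fix x assume "x \<in> set (drop n r)"
  then obtain i where "i < length r - n" "x = drop n r ! i" by (auto simp: set_conv_nth)
  then have "x = r ! (n + i)" "n + i \<in> {n..<length r}" by auto
  then show "x \<in> (\<lambda>t. r ! t) ` {n..<length r}" by blast
next
  fix x assume "x \<in> (\<lambda>t. r ! t) ` {n..<length r}"
  then obtain i where i: "n \<le> i" "i < length r" "x = r ! i" by auto
  then have "x = drop n r ! (i - n)" "i - n < length (drop n r)" by auto
  then show "x \<in> set (drop n r)" by (metis nth_mem)
qed


lemma successively_take_drop:
  "successively P xs \<Longrightarrow> successively P (take n xs) \<and> successively P (drop n xs)"
  by (metis append_take_drop_id successively_append_iff)

lemma cycle_split:
  assumes c: "dcycle A c" and i: "i < length c" and d: "0 < d" "d < length c"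
  shows "\<exists>P1 P2. dpath A P1 \<and> dpath A P2 \<and> hd P1 = c!i \<and> last P1 = c!((i+d) mod length c) \<and>
     hd P2 = c!((i+d) mod length c) \<and> last P2 = c!i \<and>
     set P1 \<inter> set P2 = {c!i, c!((i+d) mod length c)} \<and> set P1 \<union> set P2 = set c \<and>
     path_len P1 = d \<and> path_len P2 = length c - d"
proof -
  define L where "L = length c"
  define r where "r = rotate i c"
  have rc: "dcycle A r" using c by (simp add: r_def dcycle_rotate)
  have lr: "length r = L" by (simp add: r_def L_def)
  have sr: "set r = set c" by (simp add: r_def)
  have dr: "distinct r" and suc: "successively (\<lambda>a b. (a,b) \<in> A) r" and wr: "(last r, hd r) \<in> A"
    using rc by (auto simp: dcycle_succ)
  have rn: "r ! t = c ! ((i + t) mod L)" if "t < L" for t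
    using that by (simp add: r_def L_def nth_rotate)
  have L0: "0 < L" using i unfolding L_def by linarith
  have iL: "i < L" using i unfolding L_def by linarith
  have r0: "r ! 0 = c ! i" using rn[OF L0] iL by simp
  have rne: "r \<noteq> []" using lr d L_def by auto
  have hdr: "hd r = r ! 0" using rne by (simp add: hd_conv_nth)
  define P1 where "P1 = take (Suc d) r"
  define P2 where "P2 = drop d r @ [r ! 0]"
  have lP1: "length P1 = Suc d" using d lr L_def by (simp add: P1_def)
  have P1d: "P1 ! d = r ! d" by (simp add: P1_def)
  have hP1: "hd P1 = c ! i" using r0 hdr by (simp add: P1_def)
  have lastP1: "last P1 = r ! d" using lP1 P1d by (metis last_conv_nth diff_Suc_1 length_greater_0_conv zero_less_Suc)
  have dP1: "dpath A P1" using dr suc successively_take_drop[OF suc] lP1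
    by (auto simp: dpath_succ P1_def)
  have dne: "drop d r \<noteq> []" using d lr L_def by auto
  have hd_drop: "hd (drop d r) = r ! d" using d lr L_def by (simp add: hd_drop_conv_nth)
  have last_drop: "last (drop d r) = last r" using dne by simp
  have r0nd: "r ! 0 \<notin> set (drop d r)"
  proof
    assume "r ! 0 \<in> set (drop d r)"
    then obtain t where t: "d \<le> t" "t < L" "r ! t = r ! 0" using lr by (auto simp: set_drop_nth)
    have "t = 0" using nth_eq_iff_index_eq[OF dr, of t 0] t lr L0 by simp
    then show False using t d by simp
  qed
  have dP2: "dpath A P2"
    using successively_take_drop[OF suc, of d] dr r0nd wr last_drop hdr dne
    by (auto simp: dpath_succ P2_def successively_append_iff)
  have injr: "inj_on (nth r) {..<L}" using dr lr by (simp add: inj_on_nth)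
  have sP1: "set P1 = nth r ` {..<Suc d}" using d lr L_def by (simp add: P1_def set_take_nth)
  have sP2: "set P2 = nth r ` {d..<L} \<union> {r ! 0}" by (simp add: P2_def set_drop_nth lr)
  have "nth r ` {..<Suc d} \<inter> nth r ` {d..<L} = nth r ` ({..<Suc d} \<inter> {d..<L})"
    using injr d L_def by (subst inj_on_image_Int[OF injr]) auto
  also have "{..<Suc d} \<inter> {d..<L} = {d}" using d L_def by auto
  finally have I1: "nth r ` {..<Suc d} \<inter> nth r ` {d..<L} = {r ! d}" by simp
  have r0in: "r ! 0 \<in> nth r ` {..<Suc d}" by auto
  have int: "set P1 \<inter> set P2 = {r ! 0, r ! d}" using I1 r0in sP1 sP2 by auto
  have "set P1 \<union> set P2 = nth r ` ({..<Suc d} \<union> {d..<L})" using sP1 sP2 r0in by auto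
  also have "{..<Suc d} \<union> {d..<L} = {..<L}" using d L_def by auto
  also have "nth r ` {..<L} = set r" using lr by (simp add: set_take_nth[symmetric])
  finally have un: "set P1 \<union> set P2 = set c" using sr by simp
  have rd: "r ! d = c ! ((i + d) mod L)" using rn d L_def by simp
  have pl1: "path_len P1 = d" using lP1 by (simp add: path_len_def)
  have pl2: "path_len P2 = L - d" using lr by (simp add: path_len_def P2_def)
  have hP2: "hd P2 = r ! d" using hd_drop dne by (simp add: P2_def)
  have lP2: "last P2 = c ! i" using r0 by (simp add: P2_def)
  show ?thesis
    by (rule exI[of _ P1], rule exI[of _ P2])
      (use dP1 dP2 hP1 lastP1 hP2 lP2 int un pl1 pl2 rd r0 L_def in auto)
qed

lemma cycle_split2:
  assumes c: "dcycle A c" and x: "x \<in> set c" and y: "y \<in> set c" and xy: "x \<noteq> y"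
  shows "\<exists>P1 P2. dpath A P1 \<and> dpath A P2 \<and> hd P1 = x \<and> last P1 = y \<and>
     hd P2 = y \<and> last P2 = x \<and>
     set P1 \<inter> set P2 = {x, y} \<and> set P1 \<union> set P2 = set c \<and>
     path_len P1 + path_len P2 = length c"
proof -
  define L where "L = length c"
  obtain i where i: "i < L" "c ! i = x" using x by (auto simp: set_conv_nth L_def)
  obtain j where j: "j < L" "c ! j = y" using y by (auto simp: set_conv_nth L_def)
  have ij: "i \<noteq> j" using i j xy by auto
  define d where "d = (if i \<le> j then j - i else j + L - i)"
  have d0: "0 < d" "d < L" using ij i j by (auto simp: d_def)
  have dm: "(i + d) mod L = j" using ij i j by (auto simp: d_def)
  obtain P1 P2 where P: "dpath A P1 \<and> dpath A P2 \<and> hd P1 = c!i \<and> last P1 = c!((i+d) mod length c) \<and>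
     hd P2 = c!((i+d) mod length c) \<and> last P2 = c!i \<and>
     set P1 \<inter> set P2 = {c!i, c!((i+d) mod length c)} \<and> set P1 \<union> set P2 = set c \<and>
     path_len P1 = d \<and> path_len P2 = length c - d"
    using cycle_split[OF c, of i d] i d0 L_def by auto
  show ?thesis using P dm i j d0 L_def by (intro exI[of _ P1] exI[of _ P2]) auto
qed

lemma theta:
  assumes uv: "u \<noteq> v"
    and P1: "dpath A P1" "hd P1 = u" "last P1 = v"
    and P2: "dpath A P2" "hd P2 = u" "last P2 = v"
    and P3: "dpath A P3" "hd P3 = v" "last P3 = u"
    and i12: "set P1 \<inter> set P2 \<subseteq> {u,v}" and i13: "set P1 \<inter> set P3 \<subseteq> {u,v}"
    and i23: "set P2 \<inter> set P3 \<subseteq> {u,v}" and ne: "P1 \<noteq> P2"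
    and long: "path_len P1 \<ge> k \<or> path_len P2 \<ge> k"
  shows "contains_subdiv_B A k 1 1"
proof -
  have l1: "path_len P1 \<ge> 1" using path_len_pos[OF P1(1)] P1 uv by auto
  have l2: "path_len P2 \<ge> 1" using path_len_pos[OF P2(1)] P2 uv by auto
  have l3: "path_len P3 \<ge> 1" using path_len_pos[OF P3(1)] P3 uv by auto
  show ?thesis
  proof (cases "path_len P1 \<ge> k")
    case True
    show ?thesis unfolding contains_subdiv_B_def
      apply (rule exI[of _ u], rule exI[of _ v], rule exI[of _ P1], rule exI[of _ P2], rule exI[of _ P3])
      using True uv P1 P2 P3 i12 i13 i23 ne l1 l2 l3 by simp
  next
    case False
    then have "path_len P2 \<ge> k" using long by auto
    moreover have "set P2 \<inter> set P1 \<subseteq> {u,v}" using i12 by auto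
    ultimately show ?thesis unfolding contains_subdiv_B_def
      apply -
      apply (rule exI[of _ u], rule exI[of _ v], rule exI[of _ P2], rule exI[of _ P1], rule exI[of _ P3])
      using uv P1 P2 P3 i12 i13 i23 ne l1 l2 l3 by (simp add: Int_commute)
  qed
qed

lemma pc_iff: "proper_colouring W (induced_arcs A W) n f \<longleftrightarrow>
   (\<forall>x\<in>W. f x < n) \<and> (\<forall>x y. (x,y) \<in> A \<longrightarrow> x \<in> W \<longrightarrow> y \<in> W \<longrightarrow> f x \<noteq> f y)"
  unfolding proper_colouring_def induced_arcs_def by auto

lemma fwd:
  assumes c: "dcycle A c" and noB: "\<not> contains_subdiv_B A k 1 1" and k: "k \<ge> 3"
    and ij: "i < length c" "j < length c" "i \<noteq> j" and arc: "(c!i, c!j) \<in> A"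
  shows "(if i \<le> j then j - i else j + length c - i) < k"
proof (rule ccontr)
  define L where "L = length c"
  define d where "d = (if i \<le> j then j - i else j + L - i)"
  assume "\<not> (if i \<le> j then j - i else j + length c - i) < k"
  then have dk: "d \<ge> k" unfolding d_def L_def by (auto split: if_splits)
  have d0: "0 < d" "d < L" using ij by (auto simp: d_def L_def)
  have dm: "(i + d) mod L = j" using ij by (auto simp: d_def L_def)
  obtain P1 P2 where P: "dpath A P1 \<and> dpath A P2 \<and> hd P1 = c!i \<and> last P1 = c!((i+d) mod length c) \<and>
     hd P2 = c!((i+d) mod length c) \<and> last P2 = c!i \<and>
     set P1 \<inter> set P2 = {c!i, c!((i+d) mod length c)} \<and> set P1 \<union> set P2 = set c \<and>
     path_len P1 = d \<and> path_len P2 = length c - d"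
    using cycle_split[OF c, of i d] ij d0 L_def by auto
  have dc: "distinct c" using c by (simp add: dcycle_def)
  have xy: "c!i \<noteq> c!j" using nth_eq_iff_index_eq[OF dc] ij by auto
  have a: "dpath A [c!i, c!j] \<and> path_len [c!i, c!j] = 1" using dpath_arc[OF arc xy] .
  show False
  proof (rule notE[OF noB], rule theta[of "c!i" "c!j" A P1 "[c!i, c!j]" P2])
    show "P1 \<noteq> [c ! i, c ! j]" using P a dk k by auto
  qed (use P a dm xy dk L_def in auto)
qed

lemma successively_upt:
  assumes "\<And>t. a \<le> t \<Longrightarrow> Suc t < b \<Longrightarrow> R t (Suc t)"
  shows "successively R [a..<b]"
  unfolding successively_conv_nth using assms by auto

lemma jumps_B:
  assumes c: "dcycle A c" and k: "k \<ge> 3" and L: "length c \<ge> 2*k - 1"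
    and a1: "(c!0, c!(k-1)) \<in> A" and a2: "(c!(k-2), c!(2*k-3)) \<in> A" and a3: "(c!(k-1), c!(2*k-2)) \<in> A"
  shows "contains_subdiv_B A k 1 1"
proof -
  define J where "J = k - 1"
  define n where "n = length c"
  have J2: "J \<ge> 2" using k by (simp add: J_def)
  have Jn: "2*J < n" using L k by (simp add: J_def n_def)
  have dc: "distinct c" and sc: "successively (\<lambda>a b. (a,b) \<in> A) c" and wc: "(last c, hd c) \<in> A"
    using c by (auto simp: dcycle_succ)
  have cyc: "(c!t, c!Suc t) \<in> A" if "Suc t < n" for t
    using successively_nth[OF sc] that n_def by auto
  have cne: "c \<noteq> []" using Jn n_def by auto
  have wrap: "(c!(n-1), c!0) \<in> A" using wc cne by (simp add: last_conv_nth hd_conv_nth n_def)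
  define R where "R = (\<lambda>s t. (c!s, c!t) \<in> A)"
  define X1 where "X1 = [0..<J] @ [2*J-1, 2*J]"
  define X2 where "X2 = [0, J, 2*J]"
  define X3 where "X3 = [2*J..<n] @ [0]"
  have aa1: "R 0 J" and aa2: "R (J-1) (2*J-1)" and aa3: "R J (2*J)"
    using a1 a2 a3 k by (auto simp: R_def J_def numeral_eq_Suc mult_2 Suc_diff_le)
  have s1: "successively R X1"
  proof -
    have "successively R [0..<J]" by (rule successively_upt) (use cyc Jn in \<open>auto simp: R_def\<close>)
    moreover have "R (2*J-1) (2*J)" using cyc[of "2*J-1"] Jn J2 by (simp add: R_def)
    moreover have "last [0..<J] = J - 1" using J2 by simp
    ultimately show ?thesis using aa2 J2 by (simp add: X1_def successively_append_iff)
  qed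
  have s2: "successively R X2" using aa1 aa3 by (simp add: X2_def)
  have s3: "successively R X3"
  proof -
    have "successively R [2*J..<n]" by (rule successively_upt) (use cyc in \<open>auto simp: R_def\<close>)
    moreover have "last [2*J..<n] = n - 1" using Jn by simp
    ultimately show ?thesis using wrap Jn by (simp add: X3_def successively_append_iff R_def)
  qed
  have inj: "inj_on (nth c) {..<n}" using dc by (simp add: inj_on_nth n_def)
  have d1: "distinct X1" using J2 by (auto simp: X1_def)
  have d2: "distinct X2" using J2 by (auto simp: X2_def)
  have d3: "distinct X3" using Jn J2 by (auto simp: X3_def)
  have b1: "set X1 \<subseteq> {..<n}" using Jn by (auto simp: X1_def)
  have b2: "set X2 \<subseteq> {..<n}" using Jn by (auto simp: X2_def)
  have b3: "set X3 \<subseteq> {..<n}" using Jn by (auto simp: X3_def)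
  have dm: "distinct (map (nth c) X)" if "distinct X" "set X \<subseteq> {..<n}" for X
    using that inj by (simp add: distinct_map inj_on_subset)
  have dpm: "dpath A (map (nth c) X)" if "distinct X" "set X \<subseteq> {..<n}" "successively R X" "X \<noteq> []" for X
    using that dm by (simp add: dpath_succ successively_map R_def)
  have im: "set (map (nth c) X) \<inter> set (map (nth c) Y) = nth c ` (set X \<inter> set Y)"
    if "set X \<subseteq> {..<n}" "set Y \<subseteq> {..<n}" for X Y
    using that inj by (simp add: inj_on_image_Int)
  have i12: "set X1 \<inter> set X2 = {0, 2*J}" using J2 by (auto simp: X1_def X2_def)
  have i13: "set X1 \<inter> set X3 = {0, 2*J}" using J2 Jn by (auto simp: X1_def X3_def)
  have i23: "set X2 \<inter> set X3 = {0, 2*J}" using J2 Jn by (auto simp: X2_def X3_def)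
  have "(c!0 = c!(2*J)) = (0 = 2*J)" by (rule nth_eq_iff_index_eq[OF dc]) (use Jn n_def in auto)
  then have uv: "c!0 \<noteq> c!(2*J)" using J2 by simp
  have hl1: "hd (map (nth c) X1) = c!0" "last (map (nth c) X1) = c!(2*J)" using J2 by (auto simp: X1_def upt_conv_Cons)
  have hl2: "hd (map (nth c) X2) = c!0" "last (map (nth c) X2) = c!(2*J)" by (auto simp: X2_def)
  have hl3: "hd (map (nth c) X3) = c!(2*J)" "last (map (nth c) X3) = c!0" using Jn by (auto simp: X3_def upt_conv_Cons)
  have len1: "path_len (map (nth c) X1) = k" using J2 by (simp add: X1_def path_len_def J_def)
  have ne: "map (nth c) X1 \<noteq> map (nth c) X2"
  proof
    assume "map (nth c) X1 = map (nth c) X2"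
    then have "length X1 = length X2" by (metis length_map)
    then show False using J2 by (simp add: X1_def X2_def)
  qed
  show ?thesis
    apply (rule theta[of "c!0" "c!(2*J)" A "map (nth c) X1" "map (nth c) X2" "map (nth c) X3"])
    using uv dpm[OF d1 b1 s1] dpm[OF d2 b2 s2] dpm[OF d3 b3 s3] hl1 hl2 hl3 len1 ne
      im[OF b1 b2] im[OF b1 b3] im[OF b2 b3] i12 i13 i23
    by (auto simp: X1_def X2_def X3_def)
qed

lemma low_degree:
  assumes c: "dcycle A c" and noB: "\<not> contains_subdiv_B A k 1 1" and k: "k \<ge> 3"
    and L: "length c \<ge> 2*k - 2" and noloop: "\<forall>x. (x,x) \<notin> A"
  shows "\<exists>x \<in> set c. card {y \<in> set c. (x,y) \<in> A \<or> (y,x) \<in> A} \<le> 2*k - 3"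
proof -
  define n where "n = length c"
  define nbi where "nbi i = {j. j < n \<and> ((c!i, c!j) \<in> A \<or> (c!j, c!i) \<in> A)}" for i
  define dd where "dd i j = (if i \<le> j then j - i else j + n - i)" for i j
  have setc: "set c = nth c ` {..<n}" by (simp add: n_def set_take_nth[symmetric])
  have cardle: "card {y \<in> set c. (c!i,y) \<in> A \<or> (y,c!i) \<in> A} \<le> card (nbi i)" for i
  proof -
    have "{y \<in> set c. (c!i,y) \<in> A \<or> (y,c!i) \<in> A} = nth c ` nbi i" unfolding setc nbi_def by auto
    moreover have "finite (nbi i)" unfolding nbi_def by auto
    ultimately show ?thesis by (simp add: card_image_le)
  qed
  have props: "0 < dd i j \<and> dd i j < n \<and> (i + dd i j) mod n = j \<and> (dd i j < k \<or> n < dd i j + k)"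
    if i: "i < n" and j: "j \<in> nbi i" for i j
  proof -
    have jn: "j < n" using j by (simp add: nbi_def)
    have ij: "i \<noteq> j" using j noloop by (auto simp: nbi_def)
    have b1: "0 < dd i j \<and> dd i j < n \<and> (i + dd i j) mod n = j" using ij i jn by (auto simp: dd_def)
    have "dd i j < k \<or> n < dd i j + k"
    proof (cases "(c!i, c!j) \<in> A")
      case True
      then show ?thesis using fwd[OF c noB k, of i j] i jn ij by (auto simp: dd_def n_def split: if_splits)
    next
      case False
      then have "(c!j, c!i) \<in> A" using j by (simp add: nbi_def)
      then have "(if j \<le> i then i - j else i + n - j) < k" using fwd[OF c noB k, of j i] i jn ij by (cases "j \<le> i") (auto simp: n_def)
      then show ?thesis using ij i jn by (auto simp: dd_def split: if_splits)
    qed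
    then show ?thesis using b1 by simp
  qed
  have bound: "card (nbi i) \<le> card E" if i: "i < n" and E: "finite E" and h: "\<forall>j \<in> nbi i. dd i j \<in> E" for i E
  proof -
    have "nbi i \<subseteq> (\<lambda>d. (i + d) mod n) ` E"
    proof
      fix j assume j: "j \<in> nbi i"
      then have "j = (i + dd i j) mod n" using props[OF i j] by simp
      then show "j \<in> (\<lambda>d. (i + d) mod n) ` E" using h j by auto
    qed
    then have "card (nbi i) \<le> card ((\<lambda>d. (i + d) mod n) ` E)" using E by (simp add: card_mono)
    also have "\<dots> \<le> card E" by (rule card_image_le[OF E])
    finally show ?thesis .
  qed
  show ?thesis
  proof (cases "n = 2*k - 2")
    case True
    have n0: "0 < n" using True k by simp
    have "card (nbi 0) \<le> card {1..<n}"
      by (rule bound) (use n0 props[OF n0] in force)+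
    then have "card {y \<in> set c. (c!0,y) \<in> A \<or> (y,c!0) \<in> A} \<le> 2*k - 3" using cardle[of 0] True k by simp
    moreover have "c!0 \<in> set c" using n0 n_def by simp
    ultimately show ?thesis by blast
  next
    case False
    then have n1: "n \<ge> 2*k - 1" using L n_def by simp
    show ?thesis
    proof (cases "\<exists>i < n. (c!i, c!((i + (k-1)) mod n)) \<notin> A")
      case True
      then obtain i where i: "i < n" "(c!i, c!((i + (k-1)) mod n)) \<notin> A" by blast
      have "card (nbi i) \<le> card ({1..<k-1} \<union> {n+1-k..<n})"
      proof (rule bound[OF i(1)])
        show "finite ({1..<k-1} \<union> {n+1-k..<n})" by simp
        show "\<forall>j\<in>nbi i. dd i j \<in> {1..<k-1} \<union> {n+1-k..<n}"
        proof
          fix j assume j: "j \<in> nbi i"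
          note p = props[OF i(1) j]
          have "dd i j \<noteq> k - 1"
          proof
            assume e: "dd i j = k - 1"
            then have "n < dd i j + k \<or> (c!i, c!j) \<in> A \<or> dd i j < k" using p by auto
            have jj: "j = (i + (k-1)) mod n" using p e by metis
            have "(c!j, c!i) \<in> A" using i(2) jj j by (auto simp: nbi_def)
            moreover have ij': "i \<noteq> j" using j noloop by (auto simp: nbi_def)
            moreover have "j < n" using j by (simp add: nbi_def)
            ultimately have "(if j \<le> i then i - j else i + n - j) < k"
              using fwd[OF c noB k, of j i] i by (cases "j \<le> i") (auto simp: n_def)
            moreover have "(if j \<le> i then i - j else i + n - j) = n - dd i j"
              using p i j noloop by (auto simp: dd_def nbi_def split: if_splits)
            ultimately show False using e n1 k by simp
          qed
          then show "dd i j \<in> {1..<k-1} \<union> {n+1-k..<n}" using p by auto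
        qed
      qed
      moreover have "card ({1..<k-1} \<union> {n+1-k..<n}) \<le> 2*k - 3"
      proof -
        have "card ({1..<k-1} \<union> {n+1-k..<n}) \<le> card {1..<k-1} + card {n+1-k..<n}" by (rule card_Un_le)
        also have "\<dots> \<le> 2*k - 3" using k n1 by simp
        finally show ?thesis .
      qed
      ultimately have "card {y \<in> set c. (c!i,y) \<in> A \<or> (y,c!i) \<in> A} \<le> 2*k - 3" using cardle[of i] by simp
      moreover have "c!i \<in> set c" using i n_def by simp
      ultimately show ?thesis by blast
    next
      case False
      then have all: "\<And>i. i < n \<Longrightarrow> (c!i, c!((i + (k-1)) mod n)) \<in> A" by blast
      have "(c!0, c!(k-1)) \<in> A" using all[of 0] n1 k by simp
      moreover have "(c!(k-2), c!(2*k-3)) \<in> A" using all[of "k-2"] n1 k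
        by (simp add: numeral_eq_Suc)
      moreover have "(c!(k-1), c!(2*k-2)) \<in> A" using all[of "k-1"] n1 k by (simp add: numeral_eq_Suc)
      ultimately have "contains_subdiv_B A k 1 1" using jumps_B[OF c k] n1 n_def by simp
      then show ?thesis using noB by simp
    qed
  qed
qed

lemma greedy:
  assumes "distinct vs" "\<forall>x. (x,x) \<notin> A"
    "\<forall>p < length vs. card {q. q < p \<and> ((vs!p, vs!q) \<in> A \<or> (vs!q, vs!p) \<in> A)} < m"
  shows "\<exists>f. proper_colouring (set vs) (induced_arcs A (set vs)) m f"
  using assms
proof (induction vs rule: rev_induct)
  case Nil
  then show ?case by (auto simp: pc_iff)
next
  case (snoc x vs)
  have dv: "distinct vs" and xv: "x \<notin> set vs" using snoc.prems by auto
  have H: "\<And>p. p < length (vs @ [x]) \<Longrightarrow> card {q. q < p \<and> (((vs@[x])!p, (vs@[x])!q) \<in> A \<or> ((vs@[x])!q, (vs@[x])!p) \<in> A)} < m"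
    using snoc.prems(3) by blast
  have "\<forall>p < length vs. card {q. q < p \<and> ((vs!p, vs!q) \<in> A \<or> (vs!q, vs!p) \<in> A)} < m"
  proof (intro allI impI)
    fix p assume p: "p < length vs"
    have "{q. q < p \<and> (((vs@[x])!p, (vs@[x])!q) \<in> A \<or> ((vs@[x])!q, (vs@[x])!p) \<in> A)} =
          {q. q < p \<and> ((vs!p, vs!q) \<in> A \<or> (vs!q, vs!p) \<in> A)}"
      using p by (auto simp: nth_append)
    then show "card {q. q < p \<and> ((vs!p, vs!q) \<in> A \<or> (vs!q, vs!p) \<in> A)} < m"
      using H[of p] p by simp
  qed
  then obtain f where f: "proper_colouring (set vs) (induced_arcs A (set vs)) m f"
    using snoc.IH dv snoc.prems(2) by blast
  define N where "N = {q. q < length vs \<and> ((x, vs!q) \<in> A \<or> (vs!q, x) \<in> A)}"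
  have "{q. q < length vs \<and> (((vs@[x])!length vs, (vs@[x])!q) \<in> A \<or> ((vs@[x])!q, (vs@[x])!length vs) \<in> A)} = N"
    by (auto simp: N_def nth_append)
  then have cN: "card N < m" using H[of "length vs"] by simp
  define F where "F = f ` (nth vs ` N)"
  have fN: "finite N" by (simp add: N_def)
  have cF: "card F < m"
  proof -
    have "card F \<le> card (nth vs ` N)" unfolding F_def using fN by (simp add: card_image_le)
    also have "\<dots> \<le> card N" using fN by (simp add: card_image_le)
    finally show ?thesis using cN by simp
  qed
  obtain col where col: "col < m" "col \<notin> F"
  proof (rule ccontr)
    assume "\<not> thesis"
    then have "{..<m} \<subseteq> F" using that by auto
    then have "m \<le> card F" using fN unfolding F_def by (metis card_lessThan card_mono finite_imageI)
    then show False using cF by simp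
  qed
  define g where "g = f(x := col)"
  have fv: "\<forall>y\<in>set vs. f y < m" and fa: "\<forall>a b. (a,b) \<in> A \<longrightarrow> a \<in> set vs \<longrightarrow> b \<in> set vs \<longrightarrow> f a \<noteq> f b"
    using f by (auto simp: pc_iff)
  have nb: "f y \<noteq> col" if y1: "y \<in> set vs" and y2: "(x,y) \<in> A \<or> (y,x) \<in> A" for y
  proof -
    obtain q where q: "q < length vs" "vs ! q = y" using y1 by (auto simp: in_set_conv_nth)
    then have "q \<in> N" using y2 by (auto simp: N_def)
    then have "f y \<in> F" using q by (auto simp: F_def)
    then show ?thesis using col by auto
  qed
  have "proper_colouring (set (vs @ [x])) (induced_arcs A (set (vs @ [x]))) m g"
    unfolding pc_iff
  proof (intro conjI allI impI ballI)
    fix y assume "y \<in> set (vs @ [x])"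
    then show "g y < m" using fv col xv by (auto simp: g_def)
  next
    fix a b assume ab: "(a,b) \<in> A" "a \<in> set (vs @ [x])" "b \<in> set (vs @ [x])"
    show "g a \<noteq> g b"
    proof (cases "a = x")
      case True
      then have "b \<noteq> x" using ab snoc.prems(2) by auto
      then show ?thesis using True ab nb[of b] xv by (auto simp: g_def)
    next
      case False
      note aF = False
      show ?thesis
      proof (cases "b = x")
        case True
        then show ?thesis using aF ab nb[of a] xv by (auto simp: g_def)
      next
        case False
        then show ?thesis using aF ab fa by (auto simp: g_def)
      qed
    qed
  qed
  then show ?case by blast
qed

lemma single_colouring:
  assumes c: "dcycle A c" and noB: "\<not> contains_subdiv_B A k 1 1" and k: "k \<ge> 3"
    and L: "length c \<ge> 2*k - 2" and noloop: "\<forall>x. (x,x) \<notin> A"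
  shows "\<exists>f. proper_colouring (set c) (induced_arcs A (set c)) (2*k-2) f"
proof -
  define n where "n = length c"
  obtain x where x: "x \<in> set c" and lowx: "card {y \<in> set c. (x,y) \<in> A \<or> (y,x) \<in> A} \<le> 2*k - 3"
    using low_degree[OF c noB k L noloop] by blast
  obtain i where i: "i < n" "c ! i = x" using x by (auto simp: in_set_conv_nth n_def)
  define vs where "vs = rotate (Suc i) c"
  have vc: "dcycle A vs" unfolding vs_def by (rule dcycle_rotate[OF c])
  have lv: "length vs = n" by (simp add: vs_def n_def)
  have sv: "set vs = set c" by (simp add: vs_def)
  have dv: "distinct vs" using vc by (simp add: dcycle_def)
  have n0: "n \<ge> 4" using L k n_def by simp
  have lastv: "vs ! (n - 1) = x"
  proof -
    have "vs ! (n - 1) = c ! ((Suc i + (n - 1)) mod length c)" unfolding vs_def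
      by (rule nth_rotate) (use n0 in \<open>simp add: n_def\<close>)
    then have "vs ! (n - 1) = c ! ((Suc i + (n - 1)) mod n)" by (simp add: n_def)
    also have "(Suc i + (n - 1)) mod n = i" using i n0 by (simp add: mod_if)
    finally show ?thesis using i by simp
  qed
  have adjb: "p - q < k \<or> q + n < p + k" if "q < p" "p < n" "(vs!p, vs!q) \<in> A \<or> (vs!q, vs!p) \<in> A" for p q
  proof (cases "(vs!p, vs!q) \<in> A")
    case True
    then have "q + n - p < k" using fwd[OF vc noB k, of p q] that by (simp add: lv)
    then show ?thesis using that by arith
  next
    case False
    then have "(vs!q, vs!p) \<in> A" using that by simp
    then have "p - q < k" using fwd[OF vc noB k, of q p] that by (simp add: lv)
    then show ?thesis by simp
  qed
  have "\<forall>p < length vs. card {q. q < p \<and> ((vs!p, vs!q) \<in> A \<or> (vs!q, vs!p) \<in> A)} < 2*k-2"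
  proof (intro allI impI)
    fix p assume p: "p < length vs"
    define S where "S = {q. q < p \<and> ((vs!p, vs!q) \<in> A \<or> (vs!q, vs!p) \<in> A)}"
    have "card S \<le> 2*k - 3"
    proof (cases "p = n - 1")
      case True
      have "nth vs ` S \<subseteq> {y \<in> set c. (x,y) \<in> A \<or> (y,x) \<in> A}"
      proof
        fix y assume "y \<in> nth vs ` S"
        then obtain q where q: "q \<in> S" "y = vs ! q" by blast
        have "q < length vs" using q p by (simp add: S_def)
        then have "y \<in> set c" using q sv by (metis nth_mem)
        moreover have "(x,y) \<in> A \<or> (y,x) \<in> A" using q True lastv by (simp add: S_def)
        ultimately show "y \<in> {y \<in> set c. (x,y) \<in> A \<or> (y,x) \<in> A}" by simp
      qed
      moreover have "inj_on (nth vs) S" using dv p lv by (intro inj_on_nth) (auto simp: S_def)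
      ultimately have "card S \<le> card {y \<in> set c. (x,y) \<in> A \<or> (y,x) \<in> A}"
      proof -
        assume sub: "nth vs ` S \<subseteq> {y \<in> set c. (x,y) \<in> A \<or> (y,x) \<in> A}" and inj: "inj_on (nth vs) S"
        have "card S = card (nth vs ` S)" using inj by (simp add: card_image)
        also have "\<dots> \<le> card {y \<in> set c. (x,y) \<in> A \<or> (y,x) \<in> A}"
          by (rule card_mono) (use sub in auto)
        finally show ?thesis .
      qed
      then show ?thesis using lowx by simp
    next
      case False
      then have pn: "p \<le> n - 2" using p lv by simp
      have "S \<subseteq> {p + 1 - k..<p} \<union> {..<p + k - n}"
      proof
        fix q assume q: "q \<in> S"
        then have qp: "q < p" by (simp add: S_def)
        have "p - q < k \<or> q + n < p + k" using adjb[OF qp] q p lv by (simp add: S_def)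
        then show "q \<in> {p + 1 - k..<p} \<union> {..<p + k - n}" using qp by auto
      qed
      then have "card S \<le> card ({p + 1 - k..<p} \<union> {..<p + k - n})" by (simp add: card_mono)
      also have "\<dots> \<le> card {p + 1 - k..<p} + card {..<p + k - n}" by (rule card_Un_le)
      also have "\<dots> \<le> 2*k - 3" using pn k n0 by simp
      finally show ?thesis .
    qed
    then show "card {q. q < p \<and> ((vs!p, vs!q) \<in> A \<or> (vs!q, vs!p) \<in> A)} < 2*k-2"
      using k by (simp add: S_def)
  qed
  then obtain f where "proper_colouring (set vs) (induced_arcs A (set vs)) (2*k-2) f"
    using greedy[OF dv noloop] by blast
  then show ?thesis using sv by auto
qed

definition chain :: "'a list set \<Rightarrow> 'a list list \<Rightarrow> 'a \<Rightarrow> 'a \<Rightarrow> bool" where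
  "chain T Zs s t \<longleftrightarrow> Zs \<noteq> [] \<and> set Zs \<subseteq> T \<and> s \<in> set (hd Zs) \<and> t \<in> set (last Zs) \<and>
     successively (\<lambda>Z Z'. set Z \<inter> set Z' \<noteq> {}) Zs"

definition good :: "'a list list \<Rightarrow> 'a \<Rightarrow> 'a \<Rightarrow> bool" where
  "good Zs s t \<longleftrightarrow> (\<forall>i j. Suc i < j \<and> j < length Zs \<longrightarrow> set (Zs!i) \<inter> set (Zs!j) = {}) \<and>
     (\<forall>j. 0 < j \<and> j < length Zs \<longrightarrow> s \<notin> set (Zs!j)) \<and>
     (\<forall>j. Suc j < length Zs \<longrightarrow> t \<notin> set (Zs!j))"

lemma good_exists:
  "chain T Zs s t \<Longrightarrow> \<exists>Gs. chain T Gs s t \<and> good Gs s t \<and> length Gs \<le> length Zs"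
proof (induction "length Zs" arbitrary: Zs rule: less_induct)
  case less
  note ch = less.prems
  have ne: "Zs \<noteq> []" and sub: "set Zs \<subseteq> T" and s: "s \<in> set (hd Zs)" and t: "t \<in> set (last Zs)"
    and suc: "successively (\<lambda>Z Z'. set Z \<inter> set Z' \<noteq> {}) Zs" using ch by (auto simp: chain_def)
  show ?case
  proof (cases "good Zs s t")
    case True
    then show ?thesis using ch by blast
  next
    case False
    have shorter: "\<exists>Ys. chain T Ys s t \<and> length Ys < length Zs"
    proof -
      consider (a) i j where "Suc i < j" "j < length Zs" "set (Zs!i) \<inter> set (Zs!j) \<noteq> {}"
        | (b) j where "0 < j" "j < length Zs" "s \<in> set (Zs!j)"
        | (c) j where "Suc j < length Zs" "t \<in> set (Zs!j)"
        using False unfolding good_def by blast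
      then show ?thesis
      proof cases
        case a
        define Ys where "Ys = take (Suc i) Zs @ drop j Zs"
        have l: "length Ys < length Zs" using a by (simp add: Ys_def)
        have tk: "take (Suc i) Zs \<noteq> []" "drop j Zs \<noteq> []" using a by auto
        have "last (take (Suc i) Zs) = Zs ! i" using a by (subst last_conv_nth) auto
        moreover have "hd (drop j Zs) = Zs ! j" using a by (simp add: hd_drop_conv_nth)
        ultimately have "successively (\<lambda>Z Z'. set Z \<inter> set Z' \<noteq> {}) Ys"
          using successively_take_drop[OF suc] a tk by (simp add: Ys_def successively_append_iff)
        moreover have "hd Ys = hd Zs" using tk ne by (simp add: Ys_def)
        moreover have "last Ys = last Zs" using tk by (simp add: Ys_def)
        moreover have "set Ys \<subseteq> T" using sub by (auto simp: Ys_def dest: in_set_takeD in_set_dropD)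
        ultimately have "chain T Ys s t" using s t tk by (auto simp: chain_def Ys_def)
        then show ?thesis using l by blast
      next
        case b
        define Ys where "Ys = drop j Zs"
        have l: "length Ys < length Zs" using b by (simp add: Ys_def)
        have tk: "Ys \<noteq> []" using b by (simp add: Ys_def)
        have "hd Ys = Zs ! j" using b by (simp add: hd_drop_conv_nth Ys_def)
        moreover have "last Ys = last Zs" using tk by (simp add: Ys_def)
        moreover have "successively (\<lambda>Z Z'. set Z \<inter> set Z' \<noteq> {}) Ys"
          using successively_take_drop[OF suc] by (simp add: Ys_def)
        moreover have "set Ys \<subseteq> T" using sub by (auto simp: Ys_def dest: in_set_dropD)
        ultimately have "chain T Ys s t" using s t tk b by (auto simp: chain_def)
        then show ?thesis using l by blast
      next
        case c
        define Ys where "Ys = take (Suc j) Zs"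
        have l: "length Ys < length Zs" using c by (simp add: Ys_def)
        have tk: "Ys \<noteq> []" using c ne by (simp add: Ys_def)
        have "last Ys = Zs ! j" using c unfolding Ys_def by (subst last_conv_nth) auto
        moreover have "hd Ys = hd Zs" using ne by (simp add: Ys_def)
        moreover have "successively (\<lambda>Z Z'. set Z \<inter> set Z' \<noteq> {}) Ys"
          using successively_take_drop[OF suc] by (simp add: Ys_def)
        moreover have "set Ys \<subseteq> T" using sub by (auto simp: Ys_def dest: in_set_takeD)
        ultimately have "chain T Ys s t" using s t tk c by (auto simp: chain_def)
        then show ?thesis using l by blast
      qed
    qed
    then obtain Ys where Ys: "chain T Ys s t" "length Ys < length Zs" by blast
    from less.hyps[OF Ys(2) Ys(1)] obtain Gs where "chain T Gs s t \<and> good Gs s t \<and> length Gs \<le> length Ys" by blast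
    then show ?thesis using Ys(2) by auto
  qed
qed

lemma good_consec:
  assumes ch: "chain T Zs s t" and g: "good Zs s t"
    and nT: "\<forall>Z1\<in>T. \<forall>Z2\<in>T. Z1 \<noteq> Z2 \<longrightarrow> card (set Z1 \<inter> set Z2) \<le> 1"
    and i: "Suc i < length Zs"
  shows "\<exists>c. set (Zs!i) \<inter> set (Zs!Suc i) = {c}"
proof -
  have suc: "successively (\<lambda>Z Z'. set Z \<inter> set Z' \<noteq> {}) Zs" and sub: "set Zs \<subseteq> T"
    and t: "t \<in> set (last Zs)" and ne: "Zs \<noteq> []" using ch by (auto simp: chain_def)
  have nonempty: "set (Zs!i) \<inter> set (Zs!Suc i) \<noteq> {}" using successively_nth[OF suc i] .
  have neq: "Zs!i \<noteq> Zs!Suc i"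
  proof (cases "Suc (Suc i) < length Zs")
    case True
    have "set (Zs!Suc i) \<inter> set (Zs!Suc (Suc i)) \<noteq> {}" using successively_nth[OF suc True] .
    moreover have "set (Zs!i) \<inter> set (Zs!Suc (Suc i)) = {}" using g True by (auto simp: good_def)
    ultimately show ?thesis by auto
  next
    case False
    then have "Suc i = length Zs - 1" using i by simp
    then have "Zs!Suc i = last Zs" using ne by (simp add: last_conv_nth)
    moreover have "t \<notin> set (Zs!i)" using g i by (auto simp: good_def)
    ultimately show ?thesis using t by auto
  qed
  have "Zs!i \<in> T" "Zs!Suc i \<in> T" using sub i by auto
  then have "card (set (Zs!i) \<inter> set (Zs!Suc i)) \<le> 1" using nT neq by blast
  moreover have "finite (set (Zs!i) \<inter> set (Zs!Suc i))" by simp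
  moreover have "card (set (Zs!i) \<inter> set (Zs!Suc i)) > 0" using nonempty by (simp add: card_gt_0_iff)
  ultimately have "card (set (Zs!i) \<inter> set (Zs!Suc i)) = 1" by simp
  then show ?thesis by (rule card_1_singletonE) blast
qed

lemma good_tail:
  assumes ch: "chain T (Z # Zs) s t" and g: "good (Z # Zs) s t" and ne: "Zs \<noteq> []"
    and c: "c \<in> set Z" "c \<in> set (hd Zs)"
  shows "chain T Zs c t \<and> good Zs c t"
proof
  show "chain T Zs c t" using ch ne c by (auto simp: chain_def successively_Cons)
  have d: "\<forall>i j. Suc i < j \<and> j < length (Z#Zs) \<longrightarrow> set ((Z#Zs)!i) \<inter> set ((Z#Zs)!j) = {}"
    and sc: "\<forall>j. 0 < j \<and> j < length (Z#Zs) \<longrightarrow> s \<notin> set ((Z#Zs)!j)"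
    and tc: "\<forall>j. Suc j < length (Z#Zs) \<longrightarrow> t \<notin> set ((Z#Zs)!j)" using g unfolding good_def by blast+
  show "good Zs c t" unfolding good_def
  proof (intro conjI allI impI)
    fix i j assume "Suc i < j \<and> j < length Zs"
    then show "set (Zs!i) \<inter> set (Zs!j) = {}" using d[rule_format, of "Suc i" "Suc j"] by simp
  next
    fix j assume j: "0 < j \<and> j < length Zs"
    have "set ((Z#Zs)!0) \<inter> set ((Z#Zs)!Suc j) = {}" using d[rule_format, of 0 "Suc j"] j by simp
    then show "c \<notin> set (Zs!j)" using c by auto
  next
    fix j assume "Suc j < length Zs"
    then show "t \<notin> set (Zs!j)" using tc[rule_format, of "Suc j"] by simp
  qed
qed

lemma chain_paths:
  assumes "chain T Zs s t" "good Zs s t" "s \<noteq> t"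
    and cT: "\<forall>Z\<in>T. dcycle A Z" and nT: "\<forall>Z1\<in>T. \<forall>Z2\<in>T. Z1 \<noteq> Z2 \<longrightarrow> card (set Z1 \<inter> set Z2) \<le> 1"
  shows "\<exists>Q R. dpath A Q \<and> hd Q = t \<and> last Q = s \<and> dpath A R \<and> hd R = s \<and> last R = t \<and>
     set Q \<subseteq> \<Union>(set ` set Zs) \<and> set R \<subseteq> \<Union>(set ` set Zs)"
  using assms(1-3)
proof (induction Zs arbitrary: s)
  case Nil
  then show ?case by (simp add: chain_def)
next
  case (Cons Z Zs)
  have cZ: "dcycle A Z" using Cons.prems cT by (auto simp: chain_def)
  have sZ: "s \<in> set Z" using Cons.prems by (simp add: chain_def)
  show ?case
  proof (cases "Zs = []")
    case True
    then have tZ: "t \<in> set Z" using Cons.prems by (simp add: chain_def)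
    obtain P1 P2 where P: "dpath A P1 \<and> dpath A P2 \<and> hd P1 = s \<and> last P1 = t \<and>
     hd P2 = t \<and> last P2 = s \<and> set P1 \<inter> set P2 = {s, t} \<and> set P1 \<union> set P2 = set Z"
      using cycle_split2[OF cZ sZ tZ Cons.prems(3)] by blast
    show ?thesis
      by (rule exI[of _ P2], rule exI[of _ P1]) (use P True in auto)
  next
    case False
    obtain c where c: "set Z \<inter> set (hd Zs) = {c}"
      using good_consec[OF Cons.prems(1) Cons.prems(2) nT, of 0] False by (auto simp: hd_conv_nth)
    have cc: "c \<in> set Z" "c \<in> set (hd Zs)" using c by auto
    have chg: "chain T Zs c t \<and> good Zs c t" using good_tail[OF Cons.prems(1) Cons.prems(2) False cc] .
    have tZ: "t \<notin> set Z" using Cons.prems(2) False unfolding good_def by (metis length_Cons length_greater_0_conv nth_Cons_0 Suc_less_eq)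
    have sH: "s \<notin> set (hd Zs)" using Cons.prems(2) False unfolding good_def
      by (metis hd_conv_nth length_Cons length_greater_0_conv nth_Cons_Suc Suc_less_eq zero_less_Suc)
    have ct: "c \<noteq> t" using tZ cc by auto
    have sc: "s \<noteq> c" using sH cc by auto
    obtain Q0 R0 where QR: "dpath A Q0 \<and> hd Q0 = t \<and> last Q0 = c \<and> dpath A R0 \<and> hd R0 = c \<and> last R0 = t \<and>
     set Q0 \<subseteq> \<Union>(set ` set Zs) \<and> set R0 \<subseteq> \<Union>(set ` set Zs)"
      using Cons.IH[of c] chg ct by blast
    have disj: "set Z \<inter> \<Union>(set ` set Zs) \<subseteq> {c}"
    proof
      fix v assume v: "v \<in> set Z \<inter> \<Union>(set ` set Zs)"
      then obtain W where W: "W \<in> set Zs" "v \<in> set W" by blast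
      then obtain j where j0: "j < length Zs" "Zs!j = W" by (metis in_set_conv_nth)
      then have j: "j < length Zs" "v \<in> set (Zs!j)" using W by auto
      show "v \<in> {c}"
      proof (cases j)
        case 0
        then show ?thesis using c v j False by (auto simp: hd_conv_nth)
      next
        case (Suc j')
        have "set ((Z#Zs)!0) \<inter> set ((Z#Zs)!Suc j) = {}"
          using Cons.prems(2) j Suc unfolding good_def by (metis Suc_less_eq length_Cons zero_less_Suc)
        then show ?thesis using v j by auto
      qed
    qed
    obtain P1 P2 where P: "dpath A P1 \<and> dpath A P2 \<and> hd P1 = s \<and> last P1 = c \<and>
     hd P2 = c \<and> last P2 = s \<and> set P1 \<inter> set P2 = {s, c} \<and> set P1 \<union> set P2 = set Z"
      using cycle_split2[OF cZ sZ cc(1) sc] by blast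
    have j1: "set Q0 \<inter> set P2 \<subseteq> {hd P2}" using QR P disj by auto
    have j2: "set P1 \<inter> set R0 \<subseteq> {hd R0}" using QR P disj by auto
    note J1 = dpath_join[of A Q0 P2] and J2 = dpath_join[of A P1 R0]
    have "dpath A (Q0 @ tl P2) \<and> hd (Q0 @ tl P2) = t \<and> last (Q0 @ tl P2) = s \<and> set (Q0 @ tl P2) \<subseteq> \<Union>(set ` set (Z#Zs))"
      using J1 QR P j1 by auto
    moreover have "dpath A (P1 @ tl R0) \<and> hd (P1 @ tl R0) = s \<and> last (P1 @ tl R0) = t \<and> set (P1 @ tl R0) \<subseteq> \<Union>(set ` set (Z#Zs))"
      using J2 QR P j2 by auto
    ultimately show ?thesis by blast
  qed
qed

lemma last_entry:
  assumes ch: "chain T Zs s t" and g: "good Zs s t" and st: "s \<noteq> t"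
    and cT: "\<forall>Z\<in>T. dcycle A Z" and nT: "\<forall>Z1\<in>T. \<forall>Z2\<in>T. Z1 \<noteq> Z2 \<longrightarrow> card (set Z1 \<inter> set Z2) \<le> 1"
  shows "\<exists>c Q R. c \<in> set (last Zs) \<and> c \<noteq> t \<and> dpath A Q \<and> hd Q = c \<and> last Q = s \<and>
     dpath A R \<and> hd R = s \<and> last R = c \<and>
     set Q \<union> set R \<subseteq> insert s (\<Union>(set ` set (butlast Zs))) \<and>
     (set Q \<union> set R) \<inter> set (last Zs) \<subseteq> {c}"
proof (cases "length Zs = 1")
  case True
  then have "hd Zs = last Zs" by (cases Zs) auto
  then have "s \<in> set (last Zs)" using ch by (simp add: chain_def)
  then show ?thesis using st dpath_single[of A s] by (intro exI[of _ s] exI[of _ "[s]"]) auto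
next
  case False
  have ne: "Zs \<noteq> []" using ch by (simp add: chain_def)
  define Ys where "Ys = butlast Zs"
  define Z where "Z = last Zs"
  have ZYs: "Zs = Ys @ [Z]" using ne by (simp add: Ys_def Z_def)
  have yne: "Ys \<noteq> []" using False ZYs by auto
  define m where "m = length Ys"
  have lm: "length Zs = Suc m" using ZYs by (simp add: m_def)
  have m0: "0 < m" using yne by (simp add: m_def)
  have nthY: "Zs ! j = Ys ! j" if "j < m" for j using that ZYs by (simp add: nth_append m_def)
  have nthZ: "Zs ! m = Z" using ZYs by (simp add: nth_append m_def)
  have lastY: "last Ys = Zs ! (m - 1)" using yne m0 nthY by (simp add: last_conv_nth m_def)
  obtain c where c: "set (Zs!(m-1)) \<inter> set (Zs!Suc (m-1)) = {c}"
    using good_consec[OF ch g nT, of "m-1"] lm m0 by auto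
  have cYZ: "set (last Ys) \<inter> set Z = {c}" using c lastY nthZ m0 by simp
  have gd: "\<forall>i j. Suc i < j \<and> j < length Zs \<longrightarrow> set (Zs!i) \<inter> set (Zs!j) = {}"
    and sc: "\<forall>j. 0 < j \<and> j < length Zs \<longrightarrow> s \<notin> set (Zs!j)"
    and tc: "\<forall>j. Suc j < length Zs \<longrightarrow> t \<notin> set (Zs!j)" using g unfolding good_def by blast+
  have chY: "chain T Ys s c"
  proof -
    have "successively (\<lambda>Z Z'. set Z \<inter> set Z' \<noteq> {}) Ys"
      using ch ZYs by (simp add: chain_def successively_append_iff)
    moreover have "s \<in> set (hd Ys)" using ch ZYs yne by (simp add: chain_def)
    ultimately show ?thesis using ch ZYs yne cYZ by (auto simp: chain_def)
  qed
  have gY: "good Ys s c" unfolding good_def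
  proof (intro conjI allI impI)
    fix i j assume "Suc i < j \<and> j < length Ys"
    then show "set (Ys!i) \<inter> set (Ys!j) = {}" using gd[rule_format, of i j] nthY lm by (simp add: m_def)
  next
    fix j assume "0 < j \<and> j < length Ys"
    then show "s \<notin> set (Ys!j)" using sc[rule_format, of j] nthY lm by (simp add: m_def)
  next
    fix j assume j: "Suc j < length Ys"
    have "set (Zs!j) \<inter> set (Zs!m) = {}" using gd[rule_format, of j m] j lm by (simp add: m_def)
    then show "c \<notin> set (Ys!j)" using cYZ nthZ nthY j by (auto simp: m_def)
  qed
  have sZ: "s \<notin> set Z" using sc[rule_format, of m] nthZ m0 lm by simp
  have sc': "s \<noteq> c" using sZ cYZ by auto
  have tY: "t \<notin> set (last Ys)" using tc[rule_format, of "m-1"] lastY m0 lm by simp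
  have ct: "c \<noteq> t" using tY cYZ by auto
  obtain Q R where QR: "dpath A Q \<and> hd Q = c \<and> last Q = s \<and> dpath A R \<and> hd R = s \<and> last R = c \<and>
     set Q \<subseteq> \<Union>(set ` set Ys) \<and> set R \<subseteq> \<Union>(set ` set Ys)"
    using chain_paths[OF chY gY sc' cT nT] by blast
  have disj: "\<Union>(set ` set Ys) \<inter> set Z \<subseteq> {c}"
  proof
    fix v assume v: "v \<in> \<Union>(set ` set Ys) \<inter> set Z"
    then obtain W where W: "W \<in> set Ys" "v \<in> set W" by blast
    then obtain j where j0: "j < m" "Ys!j = W" by (metis in_set_conv_nth m_def)
    then have j: "j < m" "v \<in> set (Ys!j)" using W by auto
    show "v \<in> {c}"
    proof (cases "j = m - 1")
      case True
      then show ?thesis using v j cYZ lastY nthY by auto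
    next
      case False
      then have "set (Zs!j) \<inter> set (Zs!m) = {}" using gd[rule_format, of j m] j lm by simp
      then show ?thesis using v j nthY nthZ by auto
    qed
  qed
  show ?thesis
    apply (rule exI[of _ c], rule exI[of _ Q], rule exI[of _ R])
    using QR disj cYZ ct Ys_def Z_def by auto
qed

lemma nice_T:
  assumes "nice A k Cn" "T \<subseteq> Cn"
  shows "\<forall>Z\<in>T. dcycle A Z" "\<forall>Z1\<in>T. \<forall>Z2\<in>T. Z1 \<noteq> Z2 \<longrightarrow> card (set Z1 \<inter> set Z2) \<le> 1"
  using assms unfolding nice_def by blast+

lemma chain_take:
  assumes ch: "chain T Zs s t" and j: "j < length Zs" and v: "v \<in> set (Zs!j)"
  shows "chain T (take (Suc j) Zs) s v"
proof -
  have ne: "Zs \<noteq> []" using ch by (simp add: chain_def)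
  have "last (take (Suc j) Zs) = Zs ! j" using j by (subst last_conv_nth) auto
  moreover have "successively (\<lambda>Z Z'. set Z \<inter> set Z' \<noteq> {}) (take (Suc j) Zs)"
    using ch successively_take_drop by (auto simp: chain_def)
  moreover have "set (take (Suc j) Zs) \<subseteq> T" using ch by (auto simp: chain_def dest: in_set_takeD)
  ultimately show ?thesis using ch ne v by (auto simp: chain_def)
qed

lemma attach_one:
  assumes k: "k \<ge> 3" and noB: "\<not> contains_subdiv_B A k 1 1" and nice: "nice A k Cn"
    and TC: "T \<subseteq> Cn" and C: "C \<in> Cn" "C \<notin> T"
    and conn: "\<forall>s\<in>\<Union>(set ` T). \<forall>t\<in>\<Union>(set ` T). \<exists>Zs. chain T Zs s t"
    and x0: "x0 \<in> set C" "x0 \<in> \<Union>(set ` T)"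
  shows "set C \<inter> \<Union>(set ` T) = {x0}"
proof (rule ccontr)
  assume "set C \<inter> \<Union>(set ` T) \<noteq> {x0}"
  then obtain y0 where y0: "y0 \<in> set C" "y0 \<in> \<Union>(set ` T)" "y0 \<noteq> x0" using x0 by blast
  note cT = nice_T(1)[OF nice TC] and nT = nice_T(2)[OF nice TC]
  have cC: "dcycle A C" and lC: "length C \<ge> 2*k-2" using nice C by (auto simp: nice_def)
  have niceC: "\<forall>Z\<in>T. card (set Z \<inter> set C) \<le> 1" using nice C TC unfolding nice_def by (metis subsetD)
  define Pr where "Pr n \<longleftrightarrow> (\<exists>y x Zs. x \<in> set C \<and> y \<in> set C \<and> x \<noteq> y \<and> chain T Zs y x \<and> length Zs = n)" for n
  have "\<exists>Zs. chain T Zs y0 x0" using conn y0 x0 by blast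
  then have "\<exists>n. Pr n" using y0 x0 unfolding Pr_def by blast
  then obtain m where Pm: "Pr m" and mmin: "\<And>n. Pr n \<Longrightarrow> m \<le> n" by (metis LeastI Least_le)
  obtain y x Zs where xy: "x \<in> set C" "y \<in> set C" "x \<noteq> y" and chZ: "chain T Zs y x" and lZ: "length Zs = m"
    using Pm unfolding Pr_def by blast
  obtain Gs where G: "chain T Gs y x" "good Gs y x" "length Gs \<le> m" using good_exists[OF chZ] lZ by blast
  have lG: "length Gs = m" using mmin[of "length Gs"] G xy unfolding Pr_def by fastforce
  have minimal: "\<And>y' x' Zs'. x' \<in> set C \<Longrightarrow> y' \<in> set C \<Longrightarrow> x' \<noteq> y' \<Longrightarrow> chain T Zs' y' x' \<Longrightarrow> m \<le> length Zs'"
    using mmin unfolding Pr_def by blast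
  have Gne: "Gs \<noteq> []" and GT: "set Gs \<subseteq> T" and yhd: "y \<in> set (hd Gs)" and xl: "x \<in> set (last Gs)"
    using G(1) by (auto simp: chain_def)
  define Z where "Z = last Gs"
  have ZT: "Z \<in> T" using Gne GT unfolding Z_def by (meson last_in_set subsetD)
  have cZ: "dcycle A Z" and lZZ: "length Z \<ge> 2*k-2" using ZT TC nice by (auto simp: nice_def)
  have m2: "m \<ge> 2"
  proof (rule ccontr)
    assume "\<not> m \<ge> 2"
    then have "m = 1" using lG Gne by (cases Gs) auto
    then have "hd Gs = Z" using lG Gne by (cases Gs) (auto simp: Z_def)
    then have "{x, y} \<subseteq> set Z \<inter> set C" using yhd xl xy by (auto simp: Z_def)
    then have "card {x, y} \<le> card (set Z \<inter> set C)" by (intro card_mono) auto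
    then show False using niceC ZT xy by force
  qed
  have CY: "set C \<inter> \<Union>(set ` set (butlast Gs)) \<subseteq> {y}"
  proof
    fix v assume v: "v \<in> set C \<inter> \<Union>(set ` set (butlast Gs))"
    then obtain W where W: "W \<in> set (butlast Gs)" "v \<in> set W" by blast
    then obtain j where j: "j < length (butlast Gs)" "butlast Gs ! j = W" by (metis in_set_conv_nth)
    have jG: "j < length Gs" "Gs ! j = W" using j by (auto simp: nth_butlast)
    show "v \<in> {y}"
    proof (rule ccontr)
      assume "v \<notin> {y}"
      then have "m \<le> length (take (Suc j) Gs)"
        using minimal[OF _ xy(2) _ chain_take[OF G(1) jG(1)]] v W jG by auto
      then show False using j lG by simp
    qed
  qed
  have CZ: "set C \<inter> set Z \<subseteq> {x}"
  proof
    fix v assume v: "v \<in> set C \<inter> set Z"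
    show "v \<in> {x}"
    proof (rule ccontr)
      assume vx: "v \<notin> {x}"
      have "chain T [Z] v x" using v xl ZT by (auto simp: chain_def Z_def)
      then have "m \<le> 1" using minimal[OF xy(1) _ _ ] v vx by fastforce
      then show False using m2 by simp
    qed
  qed
  obtain c Q R where E: "c \<in> set Z" "c \<noteq> x" "dpath A Q" "hd Q = c" "last Q = y"
     "dpath A R" "hd R = y" "last R = c"
     "set Q \<union> set R \<subseteq> insert y (\<Union>(set ` set (butlast Gs)))"
     "(set Q \<union> set R) \<inter> set Z \<subseteq> {c}"
    using last_entry[OF G(1) G(2) xy(3)[symmetric] cT nT] unfolding Z_def by blast
  have QRC: "(set Q \<union> set R) \<inter> set C \<subseteq> {y}" using E(9) CY by auto
  have yZ: "y \<notin> set Z"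
  proof -
    have "\<forall>j. 0 < j \<and> j < length Gs \<longrightarrow> y \<notin> set (Gs!j)" using G(2) by (simp add: good_def)
    then have "y \<notin> set (Gs ! (m - 1))" using m2 lG by simp
    then show ?thesis using Gne lG by (simp add: Z_def last_conv_nth)
  qed
  have cy: "c \<noteq> y" using E(1) yZ by auto
  obtain Cxy Cyx where CS: "dpath A Cxy \<and> dpath A Cyx \<and> hd Cxy = x \<and> last Cxy = y \<and> hd Cyx = y \<and> last Cyx = x \<and>
      set Cxy \<inter> set Cyx = {x, y} \<and> set Cxy \<union> set Cyx = set C \<and> path_len Cxy + path_len Cyx = length C"
    using cycle_split2[OF cC xy(1) xy(2) xy(3)] by blast
  obtain Zcx Zxc where ZS: "dpath A Zcx \<and> dpath A Zxc \<and> hd Zcx = c \<and> last Zcx = x \<and> hd Zxc = x \<and> last Zxc = c \<and>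
      set Zcx \<inter> set Zxc = {c, x} \<and> set Zcx \<union> set Zxc = set Z \<and> path_len Zcx + path_len Zxc = length Z"
    using cycle_split2[OF cZ E(1) _ E(2)] xl by (auto simp: Z_def)
  have J1: "dpath A (Q @ tl Cyx) \<and> hd (Q @ tl Cyx) = hd Q \<and> last (Q @ tl Cyx) = last Cyx \<and>
      set (Q @ tl Cyx) = set Q \<union> set Cyx \<and> path_len (Q @ tl Cyx) = path_len Q + path_len Cyx"
    by (rule dpath_join) (use E CS QRC in auto)
  have J2: "dpath A (Cxy @ tl R) \<and> hd (Cxy @ tl R) = hd Cxy \<and> last (Cxy @ tl R) = last R \<and>
      set (Cxy @ tl R) = set Cxy \<union> set R \<and> path_len (Cxy @ tl R) = path_len Cxy + path_len R"
    by (rule dpath_join) (use E CS QRC in auto)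
  have lQ: "path_len Q \<ge> 1" using path_len_pos[OF E(3)] E cy by auto
  have lR: "path_len R \<ge> 1" using path_len_pos[OF E(6)] E cy by auto
  have yQ: "y \<in> set Q" using E(3) E(5) by (metis dpath_def last_in_set)
  have yR: "y \<in> set R" using E(6) E(7) by (metis dpath_def hd_in_set)
  have E1Z: "set (Q @ tl Cyx) \<inter> set Z \<subseteq> {c, x}" using J1 E(10) CZ CS by auto
  have E2Z: "set (Cxy @ tl R) \<inter> set Z \<subseteq> {c, x}" using J2 E(10) CZ CS by auto
  have "contains_subdiv_B A k 1 1"
  proof (cases "path_len (Q @ tl Cyx) \<ge> k")
    case True
    show ?thesis
    proof (rule theta[of c x A "Q @ tl Cyx" Zcx Zxc])
      show "Q @ tl Cyx \<noteq> Zcx" using J1 yQ yZ ZS by auto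
    qed (use True J1 ZS E CS E1Z in auto)
  next
    case False
    then have "path_len (Cxy @ tl R) \<ge> k" using J1 J2 CS lQ lR lC k by auto
    then show ?thesis
    proof (intro theta[of x c A "Cxy @ tl R" Zxc Zcx])
      show "Cxy @ tl R \<noteq> Zxc" using J2 yR yZ ZS by auto
    qed (use J2 ZS E CS E2Z in auto)
  qed
  then show False using noB by simp
qed

lemma dpath_join_ex:
  assumes "dpath A P" "dpath A Q" "last P = hd Q" "set P \<inter> set Q \<subseteq> {hd Q}"
  shows "\<exists>R. dpath A R \<and> hd R = hd P \<and> last R = last Q \<and> set R = set P \<union> set Q \<and> path_len R = path_len P + path_len Q"
  using dpath_join[OF assms] by blast

lemma attach_noarc:
  assumes k: "k \<ge> 3" and noB: "\<not> contains_subdiv_B A k 1 1" and nice: "nice A k Cn"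
    and TC: "T \<subseteq> Cn" and C: "C \<in> Cn"
    and conn: "\<forall>s\<in>\<Union>(set ` T). \<forall>t\<in>\<Union>(set ` T). \<exists>Zs. chain T Zs s t"
    and Cx: "set C \<inter> \<Union>(set ` T) = {x}"
    and a: "a \<in> set C" "a \<noteq> x" and b: "b \<in> \<Union>(set ` T)" "b \<noteq> x"
    and arc: "(a,b) \<in> A \<or> (b,a) \<in> A"
  shows False
proof -
  note cT = nice_T(1)[OF nice TC] and nT = nice_T(2)[OF nice TC]
  define U where "U = \<Union>(set ` T)"
  have xCT: "x \<in> set C \<inter> \<Union>(set ` T)" using Cx by simp
  then have xU: "x \<in> U" "x \<in> set C" unfolding U_def by blast+
  have cC: "dcycle A C" using nice C by (auto simp: nice_def)
  have xT: "x \<in> \<Union>(set ` T)" using xU by (simp add: U_def)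
  obtain Zs where chZ: "chain T Zs x b" using conn[rule_format, OF xT b(1)] by blast
  obtain Gs where G: "chain T Gs x b" "good Gs x b" using good_exists[OF chZ] by blast
  have Gne: "Gs \<noteq> []" and GT: "set Gs \<subseteq> T" and bl: "b \<in> set (last Gs)"
    using G(1) by (auto simp: chain_def)
  define Z where "Z = last Gs"
  have ZT: "Z \<in> T" using Gne GT unfolding Z_def by (meson last_in_set subsetD)
  have cZ: "dcycle A Z" and lZZ: "length Z \<ge> 2*k-2" using ZT TC nice by (auto simp: nice_def)
  have bZ: "b \<in> set Z" using bl by (simp add: Z_def)
  obtain c Q R where E: "c \<in> set Z" "c \<noteq> b" "dpath A Q" "hd Q = c" "last Q = x"
     "dpath A R" "hd R = x" "last R = c"
     "set Q \<union> set R \<subseteq> insert x (\<Union>(set ` set (butlast Gs)))"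
     "(set Q \<union> set R) \<inter> set Z \<subseteq> {c}"
    using last_entry[OF G(1) G(2) b(2)[symmetric] cT nT] unfolding Z_def by blast
  have butU: "\<Union>(set ` set (butlast Gs)) \<subseteq> U" using GT by (auto simp: U_def dest: in_set_butlastD)
  have QRU: "set Q \<union> set R \<subseteq> U" using E(9) butU xU by blast
  have ZU: "set Z \<subseteq> U" using ZT by (auto simp: U_def)
  have aU: "a \<notin> U" using Cx a by (auto simp: U_def)
  have bC: "b \<notin> set C" using Cx b by (auto simp: U_def)
  have CU: "set C \<inter> U = {x}" using Cx by (simp add: U_def)
  have xQ: "x \<in> set Q" using E(3) E(5) by (metis dpath_def last_in_set)
  have xc: "x \<in> set Z \<Longrightarrow> x = c" using xQ E(10) by auto
  have CZ: "set C \<inter> set Z \<subseteq> {c}"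
  proof
    fix v assume v: "v \<in> set C \<inter> set Z"
    then have "v = x" using CU ZU by blast
    then show "v \<in> {c}" using xc v by auto
  qed
  have bQR: "b \<notin> set Q \<union> set R" using E(10) E(2) bZ by auto
  have aQR: "a \<notin> set Q \<union> set R" using QRU aU by auto
  have aZ: "a \<notin> set Z" using ZU aU by auto
  have QRC: "(set Q \<union> set R) \<inter> set C \<subseteq> {x}" using QRU CU by auto
  obtain Cax Cxa where CS: "dpath A Cax \<and> dpath A Cxa \<and> hd Cax = a \<and> last Cax = x \<and> hd Cxa = x \<and> last Cxa = a \<and>
      set Cax \<inter> set Cxa = {a, x} \<and> set Cax \<union> set Cxa = set C \<and> path_len Cax + path_len Cxa = length C"
    using cycle_split2[OF cC a(1) xU(2) a(2)] by blast
  obtain Zcb Zbc where ZS: "dpath A Zcb \<and> dpath A Zbc \<and> hd Zcb = c \<and> last Zcb = b \<and> hd Zbc = b \<and> last Zbc = c \<and>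
      set Zcb \<inter> set Zbc = {c, b} \<and> set Zcb \<union> set Zbc = set Z \<and> path_len Zcb + path_len Zbc = length Z"
    using cycle_split2[OF cZ E(1) bZ E(2)] by blast
  have ab: "a \<noteq> b" using aU b by (auto simp: U_def)
  have sCax: "set Cax \<subseteq> set C" and sCxa: "set Cxa \<subseteq> set C" using CS by blast+
  have sZcb: "set Zcb \<subseteq> set Z" and sZbc: "set Zbc \<subseteq> set Z" using ZS by blast+
  have dCax: "dpath A Cax" "hd Cax = a" "last Cax = x" and dCxa: "dpath A Cxa" "hd Cxa = x" "last Cxa = a"
    and iC: "set Cax \<inter> set Cxa = {a, x}" using CS by blast+
  have dZcb: "dpath A Zcb" "hd Zcb = c" "last Zcb = b" and dZbc: "dpath A Zbc" "hd Zbc = b" "last Zbc = c"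
    and iZ: "set Zcb \<inter> set Zbc = {c, b}" and lZ: "path_len Zcb + path_len Zbc = length Z" using ZS by blast+
  have cb: "c \<noteq> b" using E(2) .
  have "contains_subdiv_B A k 1 1"
  proof (cases "(a,b) \<in> A")
    case True
    have AB: "dpath A [a,b]" "path_len [a,b] = 1" using dpath_arc[OF True ab] by auto
    show ?thesis
    proof (cases "path_len Zcb \<ge> k")
      case True
      obtain P0 where P0: "dpath A P0" "hd P0 = c" "last P0 = a" "set P0 = set Q \<union> set Cxa"
        using dpath_join_ex[OF E(3) dCxa(1)] E(4) E(5) dCxa QRC sCxa by auto
      have "set P0 \<inter> set [a,b] \<subseteq> {hd [a,b]}" using P0(4) bQR bC sCxa by auto
      then obtain P where P: "dpath A P" "hd P = c" "last P = b" "set P = set P0 \<union> {a,b}"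
        using dpath_join_ex[OF P0(1) AB(1)] P0 by auto
      have PZ: "set P \<inter> set Z \<subseteq> {c, b}" using P(4) P0(4) E(10) CZ sCxa aZ by blast
      have i1: "set Zcb \<inter> set P \<subseteq> {c,b}" using PZ sZcb by blast
      have i3: "set P \<inter> set Zbc \<subseteq> {c,b}" using PZ sZbc by blast
      have ne: "Zcb \<noteq> P" using P(4) aZ sZcb by auto
      show ?thesis
        by (rule theta[OF cb dZcb P(1-3) dZbc i1 _ i3 ne]) (use iZ True in auto)
    next
      case False
      then have lbc: "path_len Zbc \<ge> k - 1" using lZ lZZ by auto
      have "set [a,b] \<inter> set Zbc \<subseteq> {hd Zbc}" using aZ sZbc dZbc by auto
      then obtain P0 where P0: "dpath A P0" "hd P0 = a" "last P0 = c" "set P0 = {a,b} \<union> set Zbc"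
          "path_len P0 = 1 + path_len Zbc"
        using dpath_join_ex[OF AB(1) dZbc(1)] dZbc AB by auto
      have "set P0 \<inter> set Q \<subseteq> {hd Q}" using P0(4) aQR bQR sZbc E(10) E(4) by auto
      then obtain P where P: "dpath A P" "hd P = a" "last P = x" "set P = set P0 \<union> set Q"
          "path_len P = path_len P0 + path_len Q"
        using dpath_join_ex[OF P0(1) E(3)] P0 E(4) E(5) by auto
      have "set P \<subseteq> {a,b} \<union> U" using P(4) P0(4) sZbc ZU QRU by blast
      then have PC: "set P \<inter> set C \<subseteq> {a, x}" using CU bC by blast
      have i1: "set P \<inter> set Cax \<subseteq> {a,x}" using PC sCax by blast
      have i2: "set P \<inter> set Cxa \<subseteq> {a,x}" using PC sCxa by blast
      have ne: "P \<noteq> Cax" using P(4) P0(4) bC sCax by auto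
      have long: "path_len P \<ge> k" using P(5) P0(5) lbc k by simp
      show ?thesis
        by (rule theta[OF a(2) P(1-3) dCax dCxa i1 i2 _ ne]) (use iC long in auto)
    qed
  next
    case False
    then have ba: "(b,a) \<in> A" using arc by simp
    have BA: "dpath A [b,a]" "path_len [b,a] = 1" using dpath_arc[OF ba ab[symmetric]] by auto
    show ?thesis
    proof (cases "path_len Zbc \<ge> k")
      case True
      have "set [b,a] \<inter> set Cax \<subseteq> {hd Cax}" using bC sCax dCax by auto
      then obtain P0 where P0: "dpath A P0" "hd P0 = b" "last P0 = x" "set P0 = {b,a} \<union> set Cax"
        using dpath_join_ex[OF BA(1) dCax(1)] dCax by auto
      have "set P0 \<inter> set R \<subseteq> {hd R}" using P0(4) bQR aQR QRC sCax E(7) by auto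
      then obtain P where P: "dpath A P" "hd P = b" "last P = c" "set P = set P0 \<union> set R"
        using dpath_join_ex[OF P0(1) E(6)] P0 E(7) E(8) by auto
      have PZ: "set P \<inter> set Z \<subseteq> {b, c}" using P(4) P0(4) E(10) CZ sCax aZ by blast
      have i1: "set Zbc \<inter> set P \<subseteq> {b,c}" using PZ sZbc by blast
      have i2: "set Zbc \<inter> set Zcb \<subseteq> {b,c}" using iZ by blast
      have i3: "set P \<inter> set Zcb \<subseteq> {b,c}" using PZ sZcb by blast
      have ne: "Zbc \<noteq> P" using P(4) P0(4) aZ sZbc by auto
      show ?thesis
        by (rule theta[OF cb[symmetric] dZbc P(1-3) dZcb i1 i2 i3 ne]) (use True in auto)
    next
      case False
      then have lcb: "path_len Zcb \<ge> k - 1" using lZ lZZ by auto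
      have "set R \<inter> set Zcb \<subseteq> {hd Zcb}" using E(10) sZcb dZcb by auto
      then obtain P0 where P0: "dpath A P0" "hd P0 = x" "last P0 = b" "set P0 = set R \<union> set Zcb"
          "path_len P0 = path_len R + path_len Zcb"
        using dpath_join_ex[OF E(6) dZcb(1)] dZcb E(7) E(8) by auto
      have "set P0 \<inter> set [b,a] \<subseteq> {hd [b,a]}" using P0(4) aQR aZ sZcb by auto
      then obtain P where P: "dpath A P" "hd P = x" "last P = a" "set P = set P0 \<union> {b,a}"
          "path_len P = path_len P0 + 1"
        using dpath_join_ex[OF P0(1) BA(1)] P0 BA by auto
      have "set P \<subseteq> {a,b} \<union> U" using P(4) P0(4) sZcb ZU QRU by blast
      then have PC: "set P \<inter> set C \<subseteq> {x, a}" using CU bC by blast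
      have i1: "set P \<inter> set Cxa \<subseteq> {x,a}" using PC sCxa by blast
      have i2: "set P \<inter> set Cax \<subseteq> {x,a}" using PC sCax by blast
      have ne: "P \<noteq> Cxa" using P(4) bC sCxa by auto
      have long: "path_len P \<ge> k" using P(5) P0(5) lcb k by simp
      show ?thesis
        by (rule theta[OF a(2)[symmetric] P(1-3) dCxa dCax i1 i2 _ ne]) (use iC long in auto)
    qed
  qed
  then show False using noB by simp
qed

lemma glue:
  assumes f: "proper_colouring U (induced_arcs A U) m f"
    and g: "proper_colouring (set C) (induced_arcs A (set C)) m g"
    and CU: "set C \<inter> U = {x}"
    and noarc: "\<And>a b. a \<in> set C \<Longrightarrow> a \<noteq> x \<Longrightarrow> b \<in> U \<Longrightarrow> b \<noteq> x \<Longrightarrow> (a,b) \<notin> A \<and> (b,a) \<notin> A"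
  shows "\<exists>h. proper_colouring (U \<union> set C) (induced_arcs A (U \<union> set C)) m h"
proof -
  have fv: "\<forall>v\<in>U. f v < m" and fa: "\<forall>a b. (a,b) \<in> A \<longrightarrow> a \<in> U \<longrightarrow> b \<in> U \<longrightarrow> f a \<noteq> f b"
    using f by (auto simp: pc_iff)
  have gv: "\<forall>v\<in>set C. g v < m" and ga: "\<forall>a b. (a,b) \<in> A \<longrightarrow> a \<in> set C \<longrightarrow> b \<in> set C \<longrightarrow> g a \<noteq> g b"
    using g by (auto simp: pc_iff)
  have xU: "x \<in> U" and xC: "x \<in> set C" using CU by auto
  define \<sigma> where "\<sigma> n = (if n = g x then f x else if n = f x then g x else n)" for n
  have sl: "\<sigma> n < m" if "n < m" for n using that fv gv xU xC by (auto simp: \<sigma>_def)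
  have si: "\<sigma> a = \<sigma> b \<Longrightarrow> a = b" for a b by (auto simp: \<sigma>_def split: if_splits)
  define h where "h v = (if v \<in> U then f v else \<sigma> (g v))" for v
  have hU: "v \<in> U \<Longrightarrow> h v = f v" for v by (simp add: h_def)
  have hC: "v \<in> set C \<Longrightarrow> h v = \<sigma> (g v)" for v
  proof -
    assume v: "v \<in> set C"
    show ?thesis
    proof (cases "v \<in> U")
      case True
      then have "v = x" using CU v by auto
      then show ?thesis using True by (simp add: h_def \<sigma>_def)
    qed (simp add: h_def)
  qed
  have "proper_colouring (U \<union> set C) (induced_arcs A (U \<union> set C)) m h"
    unfolding pc_iff
  proof (intro conjI allI impI ballI)
    fix v assume "v \<in> U \<union> set C"
    then show "h v < m" using hU hC fv gv sl by auto
  next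
    fix a b assume ab: "(a,b) \<in> A" "a \<in> U \<union> set C" "b \<in> U \<union> set C"
    show "h a \<noteq> h b"
    proof (cases "a \<in> U \<and> b \<in> U")
      case True
      then show ?thesis using fa ab hU by auto
    next
      case F1: False
      show ?thesis
      proof (cases "a \<in> set C \<and> b \<in> set C")
        case True
        then show ?thesis using ga ab hC si by metis
      next
        case False
        then consider "a \<in> U" "a \<notin> set C" "b \<in> set C" "b \<notin> U" | "b \<in> U" "b \<notin> set C" "a \<in> set C" "a \<notin> U"
          using F1 ab by blast
        then show ?thesis
        proof cases
          case 1
          then have "(a,b) \<notin> A" using noarc[of b a] xU xC by auto
          then show ?thesis using ab by simp
        next
          case 2
          then have "(a,b) \<notin> A" using noarc[of a b] xU xC by auto
          then show ?thesis using ab by simp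
        qed
      qed
    qed
  qed
  then show ?thesis by blast
qed

lemma rtrancl_exit:
  assumes "(a,b) \<in> r\<^sup>*" "a \<in> P" "b \<notin> P"
  shows "\<exists>x y. (a,x) \<in> r\<^sup>* \<and> (x,y) \<in> r \<and> x \<in> P \<and> y \<notin> P"
  using assms
proof (induction rule: rtrancl_induct)
  case base
  then show ?case by simp
next
  case (step y z)
  show ?case
  proof (cases "y \<in> P")
    case True
    then show ?thesis using step by blast
  next
    case False
    then show ?thesis using step by blast
  qed
qed

lemma chain_mono: "chain T Zs s t \<Longrightarrow> T \<subseteq> T' \<Longrightarrow> chain T' Zs s t"
  by (auto simp: chain_def)

lemma chain_snoc: "chain T Zs s x \<Longrightarrow> x \<in> set C \<Longrightarrow> t \<in> set C \<Longrightarrow> chain (insert C T) (Zs @ [C]) s t"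
  unfolding chain_def by (auto simp: successively_append_iff)

lemma chain_cons: "chain T Zs x t \<Longrightarrow> x \<in> set C \<Longrightarrow> s \<in> set C \<Longrightarrow> chain (insert C T) (C # Zs) s t"
  unfolding chain_def by (auto simp: successively_Cons)

lemma chain_single: "s \<in> set C \<Longrightarrow> t \<in> set C \<Longrightarrow> chain (insert C T) [C] s t"
  unfolding chain_def by auto

lemma grow:
  assumes k: "k \<ge> 3" and noB: "\<not> contains_subdiv_B A k 1 1" and nice: "nice A k Cn"
    and noloop: "\<forall>x. (x,x) \<notin> A"
    and S: "S = {c \<in> Cn. (c0, c) \<in> (share_rel Cn)\<^sup>*}" and c0: "c0 \<in> Cn" and fin: "finite S"
  shows "1 \<le> n \<Longrightarrow> n \<le> card S \<Longrightarrow> \<exists>T. T \<subseteq> S \<and> c0 \<in> T \<and> card T = n \<and>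
    (\<forall>s\<in>\<Union>(set ` T). \<forall>t\<in>\<Union>(set ` T). \<exists>Zs. chain T Zs s t) \<and>
    (\<exists>f. proper_colouring (\<Union>(set ` T)) (induced_arcs A (\<Union>(set ` T))) (2*k-2) f)"
proof (induction n)
  case 0
  then show ?case by simp
next
  case (Suc n)
  have SC: "S \<subseteq> Cn" using S by auto
  have c0S: "c0 \<in> S" using S c0 by auto
  show ?case
  proof (cases "n = 0")
    case True
    have cc: "dcycle A c0" "length c0 \<ge> 2*k-2" using nice c0 by (auto simp: nice_def)
    obtain f where f: "proper_colouring (set c0) (induced_arcs A (set c0)) (2*k-2) f"
      using single_colouring[OF cc(1) noB k cc(2) noloop] by blast
    have "\<forall>s\<in>\<Union>(set ` {c0}). \<forall>t\<in>\<Union>(set ` {c0}). \<exists>Zs. chain {c0} Zs s t"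
      using chain_single[of _ c0 _ "{}"] by auto
    then show ?thesis using True c0S f by (intro exI[of _ "{c0}"]) auto
  next
    case False
    then obtain T where T: "T \<subseteq> S" "c0 \<in> T" "card T = n"
      and conn: "\<forall>s\<in>\<Union>(set ` T). \<forall>t\<in>\<Union>(set ` T). \<exists>Zs. chain T Zs s t"
      and col: "\<exists>f. proper_colouring (\<Union>(set ` T)) (induced_arcs A (\<Union>(set ` T))) (2*k-2) f"
      using Suc by auto
    have finT: "finite T" using T(1) fin finite_subset by blast
    have "T \<noteq> S" using T(3) Suc.prems by auto
    then obtain d where d: "d \<in> S" "d \<notin> T" using T(1) by blast
    have "(c0, d) \<in> (share_rel Cn)\<^sup>*" using d S by auto
    then obtain c1 C where ex: "(c0, c1) \<in> (share_rel Cn)\<^sup>*" "(c1, C) \<in> share_rel Cn" "c1 \<in> T" "C \<notin> T"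
      using rtrancl_exit[of c0 d "share_rel Cn" T] T(2) d(2) by blast
    have CCn: "C \<in> Cn" and c1C: "set c1 \<inter> set C \<noteq> {}" using ex(2) by (auto simp: share_rel_def)
    have CS: "C \<in> S" using S CCn ex(1) ex(2) by auto
    obtain x where x: "x \<in> set c1" "x \<in> set C" using c1C by blast
    have xU: "x \<in> \<Union>(set ` T)" using x ex(3) by blast
    have TC: "T \<subseteq> Cn" using T(1) SC by blast
    have CU: "set C \<inter> \<Union>(set ` T) = {x}"
      using attach_one[OF k noB nice TC CCn ex(4) conn x(2) xU] .
    have noarc: "(a,b) \<notin> A \<and> (b,a) \<notin> A" if "a \<in> set C" "a \<noteq> x" "b \<in> \<Union>(set ` T)" "b \<noteq> x" for a b
      using attach_noarc[OF k noB nice TC CCn conn CU that] by blast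
    have cc: "dcycle A C" "length C \<ge> 2*k-2" using nice CCn by (auto simp: nice_def)
    obtain g where g: "proper_colouring (set C) (induced_arcs A (set C)) (2*k-2) g"
      using single_colouring[OF cc(1) noB k cc(2) noloop] by blast
    obtain f where f: "proper_colouring (\<Union>(set ` T)) (induced_arcs A (\<Union>(set ` T))) (2*k-2) f"
      using col by blast
    obtain h where h: "proper_colouring (\<Union>(set ` T) \<union> set C) (induced_arcs A (\<Union>(set ` T) \<union> set C)) (2*k-2) h"
      using glue[OF f g CU noarc] by blast
    have UU: "\<Union>(set ` insert C T) = \<Union>(set ` T) \<union> set C" by auto
    have conn': "\<forall>s\<in>\<Union>(set ` insert C T). \<forall>t\<in>\<Union>(set ` insert C T). \<exists>Zs. chain (insert C T) Zs s t"
    proof (intro ballI)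
      fix s t assume s: "s \<in> \<Union>(set ` insert C T)" and t: "t \<in> \<Union>(set ` insert C T)"
      show "\<exists>Zs. chain (insert C T) Zs s t"
      proof (cases "s \<in> set C")
        case sC: True
        show ?thesis
        proof (cases "t \<in> set C")
          case True
          then show ?thesis using chain_single[OF sC True] by blast
        next
          case False
          then have "t \<in> \<Union>(set ` T)" using t by auto
          then obtain Zs where Zs: "chain T Zs x t" using conn xU by blast
          show ?thesis using chain_cons[OF Zs x(2) sC] by blast
        qed
      next
        case sC: False
        then have sT: "s \<in> \<Union>(set ` T)" using s by auto
        show ?thesis
        proof (cases "t \<in> set C")
          case True
          obtain Zs where Zs: "chain T Zs s x" using conn xU sT by blast
          show ?thesis using chain_snoc[OF Zs x(2) True] by blast
        next
          case False
          then have "t \<in> \<Union>(set ` T)" using t by auto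
          then obtain Zs where Zs: "chain T Zs s t" using conn sT by blast
          have "T \<subseteq> insert C T" by blast
          then show ?thesis using chain_mono[OF Zs] by blast
        qed
      qed
    qed
    have "card (insert C T) = Suc n" using finT ex(4) T(3) by simp
    then show ?thesis using conn' h UU T CS by (intro exI[of _ "insert C T"]) auto
  qed
qed

theorem mainTheorem10:
  fixes V :: "'a set" and A :: "('a \<times> 'a) set" and k :: nat
    and \<C> \<S> :: "'a list set"
  assumes "k \<ge> 3"
    and "digraph V A"
    and "\<not> contains_subdiv_B A k 1 1"
    and "nice A k \<C>"
    and "is_component \<C> \<S>"
  shows "chromatic_number (\<Union>c \<in> \<S>. set c) (induced_arcs A (\<Union>c \<in> \<S>. set c)) \<le> 2 * k - 2"
proof -
  obtain c0 where c0: "c0 \<in> \<C>" and S: "\<S> = {c \<in> \<C>. (c0, c) \<in> (share_rel \<C>)\<^sup>*}"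
    using assms(5) by (auto simp: is_component_def)
  have noloop: "\<forall>x. (x,x) \<notin> A" and AV: "A \<subseteq> V \<times> V" and finV: "finite V"
    using assms(2) by (auto simp: digraph_def)
  have sub: "\<S> \<subseteq> {xs. set xs \<subseteq> V \<and> distinct xs}"
  proof
    fix c assume "c \<in> \<S>"
    then have "c \<in> \<C>" using S by auto
    then have dc: "dcycle A c" using assms(4) by (auto simp: nice_def)
    have "set c \<subseteq> V"
    proof
      fix v assume "v \<in> set c"
      then obtain i where i: "i < length c" "c ! i = v" by (auto simp: in_set_conv_nth)
      then have "(c ! i, c ! (Suc i mod length c)) \<in> A" using dc by (auto simp: dcycle_def)
      then show "v \<in> V" using AV i by auto
    qed
    then show "c \<in> {xs. set xs \<subseteq> V \<and> distinct xs}" using dc by (auto simp: dcycle_def)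
  qed
  have fin: "finite \<S>" using finite_subset[OF sub finite_subset_distinct[OF finV]] .
  have c0S: "c0 \<in> \<S>" using S c0 by auto
  then have "1 \<le> card \<S>" using fin by (metis card_0_eq empty_iff less_one not_le)
  then obtain T where T: "T \<subseteq> \<S>" "card T = card \<S>"
    and col: "\<exists>f. proper_colouring (\<Union>(set ` T)) (induced_arcs A (\<Union>(set ` T))) (2*k-2) f"
    using grow[OF assms(1) assms(3) assms(4) noloop S c0 fin, of "card \<S>"] by blast
  have "T = \<S>" using card_subset_eq[OF fin T(1) T(2)] .
  then obtain f where f: "proper_colouring (\<Union>c \<in> \<S>. set c) (induced_arcs A (\<Union>c \<in> \<S>. set c)) (2*k-2) f"
    using col by auto
  show ?thesis unfolding chromatic_number_def
    by (rule Least_le) (use f in blast)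
qed

end
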